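(* Let $\mathcal{A}$ and $\mathcal{B}$ be $C^{*}$-algebras, let $\Xi$ be a Hilbert $\mathcal{A}$-module and $\nabla$ a Hilbert $\mathcal{B}$-module. Let $f:\Xi \rightarrow \nabla$ be a mapping for which there exists a function $\varphi:\Xi^{3}\rightarrow[0,\infty)$ such that $$\| f(\mu x+y)-\mu f(x)-f(y)\| \leq \varphi(x,y,0)$$ and $$\| f(\langle x,y\rangle z)-\langle f(x),f(y)\rangle f(z)\| \leq \varphi(x,y,z)$$ for all $x,y,z\in\Xi$ and all $\mu\in\mathbb{T}$. If there exists $0\leq L<1$ such that $\varphi(x,y,z)\leq 2L\,\varphi\left(\frac{x}{2},\frac{y}{2},\frac{z}{2}\right)$ for all $x,y,z\in\Xi$, then there exists a unique Hilbert $C^{*}$-module homomorphism $H:\Xi\rightarrow\nabla$ such that $$\|f(x)-H(x)\|\leq \frac{1}{2-2L}\varphi(x,x,0)$$ for all $x\in\Xi$.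
   Context: $\mathbb{T}=\{z\in\mathbb{C}:|z|=1\}$. For a $C^{*}$-algebra $\mathcal{A}$, a (left) Hilbert $\mathcal{A}$-module is a complex linear space $\Xi$ with a compatible left $\mathcal{A}$-module action ($\lambda(ax)=(\lambda a)x=a(\lambda x)$) and a map $\langle\cdot,\cdot\rangle:\Xi\times\Xi\to\mathcal{A}$ that is linear in the first variable, satisfies $\langle ax,y\rangle=a\langle x,y\rangle$, $\langle x,y\rangle^{*}=\langle y,x\rangle$, $\langle x,x\rangle\geq 0$ with equality iff $x=0$, and such that $\Xi$ is complete in the norm $\|x\|=\|\langle x,x\rangle\|^{1/2}$. For a Hilbert $\mathcal{A}$-module $\Xi$ and a Hilbert $\mathcal{B}$-module $\nabla$, a Hilbert $C^{*}$-module homomorphism is a $\mathbb{C}$-linear map $H:\Xi\to\nabla$ with $H(\langle x,y\rangle z)=\langle H(x),H(y)\rangle H(z)$ for all $x,y,z\in\Xi$. *)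

theory Defs
  imports Complex_Main
begin

class complex_vec = ab_group_add +
  fixes scaleC :: "complex \<Rightarrow> 'a \<Rightarrow> 'a" (infixr \<open>*\<^sub>C\<close> 75)
  assumes scaleC_add_right: "c *\<^sub>C (x + y) = c *\<^sub>C x + c *\<^sub>C y"
    and scaleC_add_left: "(c + d) *\<^sub>C x = c *\<^sub>C x + d *\<^sub>C x"
    and scaleC_scaleC: "c *\<^sub>C (d *\<^sub>C x) = (c * d) *\<^sub>C x"
    and scaleC_one: "1 *\<^sub>C x = x"

class cstar_algebra = real_normed_algebra + banach + complex_vec +
  fixes cstar :: "'a \<Rightarrow> 'a"
  assumes scaleR_scaleC: "r *\<^sub>R x = complex_of_real r *\<^sub>C x"
    and norm_scaleC: "norm (c *\<^sub>C x) = cmod c * norm x"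
    and mult_scaleC_left: "(c *\<^sub>C x) * y = c *\<^sub>C (x * y)"
    and mult_scaleC_right: "x * (c *\<^sub>C y) = c *\<^sub>C (x * y)"
    and cstar_cstar: "cstar (cstar x) = x"
    and cstar_add: "cstar (x + y) = cstar x + cstar y"
    and cstar_scaleC: "cstar (c *\<^sub>C x) = cnj c *\<^sub>C cstar x"
    and cstar_mult: "cstar (x * y) = cstar y * cstar x"
    and cstar_identity: "norm (cstar x * x) = norm x ^ 2"

definition cstar_pos :: "'a::cstar_algebra \<Rightarrow> bool" where
  "cstar_pos a \<longleftrightarrow> (\<exists>b. a = cstar b * b)"

definition hnorm :: "('x \<Rightarrow> 'x \<Rightarrow> 'a::cstar_algebra) \<Rightarrow> 'x \<Rightarrow> real" where
  "hnorm ip x = sqrt (norm (ip x x))"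

definition hilbert_module ::
  "('a::cstar_algebra \<Rightarrow> 'x::complex_vec \<Rightarrow> 'x) \<Rightarrow> ('x \<Rightarrow> 'x \<Rightarrow> 'a) \<Rightarrow> bool" where
  "hilbert_module act ip \<longleftrightarrow>
     \<comment> \<open>left A-module action compatible with the complex linear structure\<close>
     (\<forall>a x y. act a (x + y) = act a x + act a y) \<and>
     (\<forall>a b x. act (a + b) x = act a x + act b x) \<and>
     (\<forall>a b x. act (a * b) x = act a (act b x)) \<and>
     (\<forall>c a x. c *\<^sub>C (act a x) = act (c *\<^sub>C a) x \<and> act (c *\<^sub>C a) x = act a (c *\<^sub>C x)) \<and>
     \<comment> \<open>A-valued inner product\<close>
     (\<forall>x y z. ip (x + y) z = ip x z + ip y z) \<and>
     (\<forall>c x y. ip (c *\<^sub>C x) y = c *\<^sub>C ip x y) \<and>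
     (\<forall>a x y. ip (act a x) y = a * ip x y) \<and>
     (\<forall>x y. cstar (ip x y) = ip y x) \<and>
     (\<forall>x. cstar_pos (ip x x)) \<and>
     (\<forall>x. ip x x = 0 \<longleftrightarrow> x = 0) \<and>
     \<comment> \<open>completeness w.r.t. the norm sqrt(norm <x,x>)\<close>
     (\<forall>X::nat \<Rightarrow> 'x. (\<forall>e>0. \<exists>N. \<forall>m\<ge>N. \<forall>n\<ge>N. hnorm ip (X m - X n) < e) \<longrightarrow>
        (\<exists>l. \<forall>e>0. \<exists>N. \<forall>n\<ge>N. hnorm ip (X n - l) < e))"

definition hilbert_module_hom ::
  "('a::cstar_algebra \<Rightarrow> 'x::complex_vec \<Rightarrow> 'x) \<Rightarrow> ('x \<Rightarrow> 'x \<Rightarrow> 'a) \<Rightarrow>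
   ('b::cstar_algebra \<Rightarrow> 'y::complex_vec \<Rightarrow> 'y) \<Rightarrow> ('y \<Rightarrow> 'y \<Rightarrow> 'b) \<Rightarrow> ('x \<Rightarrow> 'y) \<Rightarrow> bool" where
  "hilbert_module_hom actA ipX actB ipY H \<longleftrightarrow>
     (\<forall>x y. H (x + y) = H x + H y) \<and>
     (\<forall>c x. H (c *\<^sub>C x) = c *\<^sub>C H x) \<and>
     (\<forall>x y z. H (actA (ipX x y) z) = actB (ipY (H x) (H y)) (H z))"

end

theory Submission
  imports Defs "HOL-Computational_Algebra.Formal_Power_Series"
begin

context complex_vec begin
lemma scaleC_zero_left[simp]: "0 *\<^sub>C x = 0"
proof -
  have "0 *\<^sub>C x = 0 *\<^sub>C x + 0 *\<^sub>C x" using scaleC_add_left[of 0 0 x] by simp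
  thus ?thesis by (metis add_cancel_right_right)
qed
lemma scaleC_zero_right[simp]: "c *\<^sub>C 0 = 0"
proof -
  have "c *\<^sub>C 0 = c *\<^sub>C 0 + c *\<^sub>C 0" using scaleC_add_right[of c 0 0] by simp
  thus ?thesis by (metis add_cancel_right_right)
qed
lemma scaleC_minus_right: "c *\<^sub>C (- x) = - (c *\<^sub>C x)"
proof -
  have "c *\<^sub>C (- x) + c *\<^sub>C x = 0"
    by (simp only: scaleC_add_right[symmetric] add.left_inverse scaleC_zero_right)
  thus ?thesis by (simp only: eq_neg_iff_add_eq_0)
qed
lemma scaleC_minus_left: "(- c) *\<^sub>C x = - (c *\<^sub>C x)"
proof -
  have "(- c) *\<^sub>C x + c *\<^sub>C x = 0"
    by (simp only: scaleC_add_left[symmetric]) simp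
  thus ?thesis by (simp only: eq_neg_iff_add_eq_0)
qed
lemma scaleC_diff_right: "c *\<^sub>C (x - y) = c *\<^sub>C x - c *\<^sub>C y"
  by (simp only: diff_conv_add_uminus scaleC_add_right scaleC_minus_right)
lemma scaleC_diff_left: "(c - d) *\<^sub>C x = c *\<^sub>C x - d *\<^sub>C x"
proof -
  have "(c - d) *\<^sub>C x = (c + - d) *\<^sub>C x" by simp
  also have "\<dots> = c *\<^sub>C x - d *\<^sub>C x"
    by (simp only: scaleC_add_left scaleC_minus_left diff_conv_add_uminus)
  finally show ?thesis .
qed
lemma scaleC_2: "(2::complex) *\<^sub>C x = x + x"
proof -
  have "(2::complex) *\<^sub>C x = (1 + 1) *\<^sub>C x" by simp
  thus ?thesis by (simp only: scaleC_add_left scaleC_one)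
qed
end

context cstar_algebra begin
lemma cstar_zero[simp]: "cstar 0 = 0"
proof -
  have "cstar 0 = cstar 0 + cstar 0" using cstar_add[of 0 0] by simp
  thus ?thesis by (metis add_cancel_right_right)
qed
lemma cstar_minus: "cstar (- x) = - cstar x"
proof -
  have "cstar (- x) + cstar x = 0" by (simp only: cstar_add[symmetric]) simp
  thus ?thesis by (simp only: eq_neg_iff_add_eq_0)
qed
lemma cstar_diff: "cstar (x - y) = cstar x - cstar y"
  by (simp only: diff_conv_add_uminus cstar_add cstar_minus)
lemma cstar_scaleR: "cstar (r *\<^sub>R x) = r *\<^sub>R cstar x"
  by (simp add: scaleR_scaleC cstar_scaleC)
lemma norm_le_cstar: "norm x \<le> norm (cstar x)"
proof (cases "x = 0")
  case False
  have "norm x ^ 2 = norm (cstar x * x)" by (simp add: cstar_identity)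
  also have "\<dots> \<le> norm (cstar x) * norm x" by (rule norm_mult_ineq)
  finally have "norm x * norm x \<le> norm (cstar x) * norm x" by (simp add: power2_eq_square)
  thus ?thesis using False by (meson mult_right_le_imp_le zero_less_norm_iff)
next
  case True thus ?thesis by simp
qed
lemma norm_cstar[simp]: "norm (cstar x) = norm x"
proof (rule order.antisym)
  show "norm (cstar x) \<le> norm x" using norm_le_cstar[of "cstar x"] by (simp only: cstar_cstar)
  show "norm x \<le> norm (cstar x)" by (rule norm_le_cstar)
qed
lemma norm_mult_cstar: "norm (x * cstar x) = norm x ^ 2"
  using cstar_identity[of "cstar x"] by (simp only: cstar_cstar norm_cstar)
end


class ucstar = cstar_algebra + real_normed_algebra_1

definition sa :: "'a::cstar_algebra \<Rightarrow> bool" where "sa h \<longleftrightarrow> cstar h = h"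

lemma cstar_one: "cstar (1::'a::ucstar) = 1"
proof -
  have "cstar ((1::'a) * cstar 1) = cstar (cstar 1) * cstar 1" by (rule cstar_mult)
  thus ?thesis by (simp add: cstar_cstar)
qed

lemma cstar_of_real: "cstar (of_real t :: 'a::ucstar) = of_real t"
  by (simp add: of_real_def cstar_scaleR cstar_one)

lemma cstar_power: "cstar ((x::'a::ucstar) ^ n) = cstar x ^ n"
proof (induction n)
  case 0 thus ?case by (simp add: cstar_one)
next
  case (Suc n)
  have "cstar (x ^ Suc n) = cstar (x ^ n * x)" by (simp add: power_commutes)
  also have "\<dots> = cstar x * cstar x ^ n" by (simp add: cstar_mult Suc)
  finally show ?case by simp
qed

lemma bounded_linear_cstar: "bounded_linear (cstar :: 'a::cstar_algebra \<Rightarrow> 'a)"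
proof
  show "cstar (x + y) = cstar x + cstar y" for x y :: 'a by (rule cstar_add)
  show "cstar (r *\<^sub>R x) = r *\<^sub>R cstar x" for r and x :: 'a by (rule cstar_scaleR)
  show "\<exists>K. \<forall>x::'a. norm (cstar x) \<le> norm x * K" by (rule exI[of _ 1]) simp
qed

lemma sa_norm_sq: "sa h \<Longrightarrow> norm (h * h) = norm h ^ 2"
  using cstar_identity[of h] by (simp add: sa_def)

lemma sa_power: "sa h \<Longrightarrow> sa ((h::'a::ucstar) ^ n)"
  by (simp add: sa_def cstar_power)

lemma sa_norm_pow2: "sa h \<Longrightarrow> norm ((h::'a::ucstar) ^ (2 ^ k)) = norm h ^ (2 ^ k)"
proof (induction k)
  case 0 thus ?case by simp
next
  case (Suc k)
  have "(h::'a) ^ (2 ^ Suc k) = h ^ (2 ^ k) * h ^ (2 ^ k)"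
    by (simp add: power_add[symmetric] mult_2)
  hence "norm (h ^ (2 ^ Suc k)) = norm (h ^ (2 ^ k)) ^ 2"
    using sa_norm_sq[OF sa_power[OF Suc.prems]] by simp
  thus ?case using Suc by (simp add: power_mult[symmetric] mult.commute)
qed

lemma sa_norm_power: assumes "sa h" shows "norm ((h::'a::ucstar) ^ n) = norm h ^ n"
proof (cases "norm h = 0")
  case True thus ?thesis by (cases n) auto
next
  case False
  hence hp: "norm h > 0" by simp
  have "n < 2 ^ n" by (rule less_exp)
  define N where "N = (2::nat) ^ n"
  have nN: "n \<le> N" using \<open>n < 2 ^ n\<close> N_def by simp
  have "norm h ^ N = norm (h ^ N)" using sa_norm_pow2[OF assms, of n] N_def by simp
  also have "h ^ N = h ^ n * h ^ (N - n)" using nN by (simp add: power_add[symmetric])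
  also have "norm \<dots> \<le> norm (h ^ n) * norm (h ^ (N - n))" by (rule norm_mult_ineq)
  also have "\<dots> \<le> norm (h ^ n) * norm h ^ (N - n)"
    by (intro mult_left_mono norm_power_ineq) simp
  finally have "norm h ^ n * norm h ^ (N - n) \<le> norm (h ^ n) * norm h ^ (N - n)"
    using nN by (simp add: power_add[symmetric])
  hence "norm h ^ n \<le> norm (h ^ n)" using hp by (simp add: mult_le_cancel_right)
  thus ?thesis using norm_power_ineq[of h n] by simp
qed

section \<open>Binomial coefficients of sqrt(1-z)\<close>

definition bc :: "nat \<Rightarrow> real" where "bc n = ((1/2::real) gchoose n) * (-1) ^ n"

lemma bc_0[simp]: "bc 0 = 1" by (simp add: bc_def)

lemma bc_Suc: "bc (Suc n) = bc n * (real n - 1/2) / (real n + 1)"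
proof -
  have "(1/2::real) * ((1/2) gchoose n) = real n * ((1/2) gchoose n) + real (Suc n) * ((1/2) gchoose Suc n)"
    by (rule gbinomial_mult_1)
  hence e: "((1/2::real) gchoose Suc n) = (1/2 - real n) * ((1/2) gchoose n) / (real n + 1)"
    by (simp add: field_simps)
  show ?thesis unfolding bc_def e by (simp add: field_simps)
qed

lemma bc_nonpos: "n \<ge> 1 \<Longrightarrow> bc n \<le> 0"
proof (induction n)
  case 0 thus ?case by simp
next
  case (Suc n)
  show ?case
  proof (cases "n = 0")
    case True thus ?thesis by (simp add: bc_Suc)
  next
    case False
    hence "bc n \<le> 0" "real n - 1/2 \<ge> 0" using Suc by auto
    thus ?thesis by (simp add: bc_Suc mult_nonpos_nonneg divide_nonpos_pos)
  qed
qed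

lemma bc_partial: "(\<Sum>k\<le>m. bc k) = - 2 * (real m + 1) * bc (Suc m)"
proof (induction m)
  case 0 thus ?case by (simp add: bc_Suc)
next
  case (Suc m)
  have "(\<Sum>k\<le>Suc m. bc k) = - 2 * (real m + 1) * bc (Suc m) + bc (Suc m)" using Suc by simp
  also have "\<dots> = - 2 * (real (Suc m) + 1) * bc (Suc (Suc m))"
    by (simp add: bc_Suc[of "Suc m"] field_simps)
  finally show ?case .
qed

lemma bc_partial_nonneg: "(\<Sum>k\<le>m. bc k) \<ge> 0"
  using bc_nonpos[of "Suc m"] by (simp add: bc_partial mult_nonpos_nonpos)

lemma abs_bc_partial: "(\<Sum>k<n. \<bar>bc (Suc k)\<bar>) \<le> 1"
proof -
  have "(\<Sum>k<n. \<bar>bc (Suc k)\<bar>) = - (\<Sum>k<n. bc (Suc k))"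
    using bc_nonpos by (simp add: sum_negf[symmetric] abs_of_nonpos)
  also have "(\<Sum>k<n. bc (Suc k)) = (\<Sum>k\<le>n. bc k) - 1"
    by (simp add: lessThan_Suc_atMost[symmetric] sum.lessThan_Suc_shift del: sum.lessThan_Suc)
  finally show ?thesis using bc_partial_nonneg[of n] by simp
qed

lemma summable_abs_bc_Suc: "summable (\<lambda>k. \<bar>bc (Suc k)\<bar>)"
  by (rule summableI_nonneg_bounded[OF _ abs_bc_partial]) simp

lemma summable_abs_bc: "summable (\<lambda>k. \<bar>bc k\<bar>)"
  using summable_abs_bc_Suc by (simp add: summable_Suc_iff[symmetric, where f="\<lambda>k. \<bar>bc k\<bar>"])

lemma suminf_abs_bc_Suc: "(\<Sum>k. \<bar>bc (Suc k)\<bar>) \<le> 1"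
  by (rule suminf_le_const[OF summable_abs_bc_Suc abs_bc_partial])

lemma bc_conv: "(\<Sum>i\<le>k. bc i * bc (k - i)) = (if k = 0 then 1 else if k = 1 then -1 else 0)"
proof -
  have "(\<Sum>i\<le>k. bc i * bc (k - i)) = (\<Sum>i\<le>k. ((1/2::real) gchoose i) * ((1/2) gchoose (k - i)) * (-1)^k)"
    by (intro sum.cong refl) (simp add: bc_def power_add[symmetric])
  also have "\<dots> = (\<Sum>i\<in>{0..k}. ((1/2::real) gchoose i) * ((1/2) gchoose (k - i))) * (-1)^k"
    by (simp add: sum_distrib_right atLeast0AtMost)
  also have "\<dots> = ((1::real) gchoose k) * (-1)^k"
    using gbinomial_Vandermonde[of "1/2::real" "1/2" k] by simp
  also have "\<dots> = (if k = 0 then 1 else if k = 1 then -1 else 0)"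
  proof -
    have "((1::real) gchoose k) = 0" if k2: "k \<ge> 2"
    proof -
      have "(\<Prod>i = 0..<k. (1::real) - real i) = 0"
        using k2 by (subst prod_zero_iff) (auto intro!: bexI[of _ 1])
      hence "fact k * ((1::real) gchoose k) = 0" by (simp add: gbinomial_mult_fact)
      thus ?thesis by simp
    qed
    thus ?thesis by (cases k; cases "k - 1") auto
  qed
  finally show ?thesis .
qed


definition sqs :: "'a::ucstar \<Rightarrow> 'a" where "sqs x = (\<Sum>n. bc n *\<^sub>R x ^ n)"

lemma sqs_summable_norm:
  assumes "norm (x::'a::ucstar) \<le> 1" shows "summable (\<lambda>n. norm (bc n *\<^sub>R x ^ n))"
proof (rule summable_comparison_test'[OF summable_abs_bc, of 0])
  fix n :: nat
  have "norm (x ^ n) \<le> 1"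
    using norm_power_ineq[of x n] power_le_one[OF norm_ge_zero assms, of n] by linarith
  thus "norm (norm (bc n *\<^sub>R x ^ n)) \<le> \<bar>bc n\<bar>"
    by (simp add: mult_left_le[OF _ abs_ge_zero])
qed

lemma sqs_summable: "norm (x::'a::ucstar) \<le> 1 \<Longrightarrow> summable (\<lambda>n. bc n *\<^sub>R x ^ n)"
  by (rule summable_norm_cancel[OF sqs_summable_norm])

lemma sqs_sq:
  assumes "norm (x::'a::ucstar) \<le> 1" shows "sqs x * sqs x = 1 - x"
proof -
  have "sqs x * sqs x = (\<Sum>k. \<Sum>i\<le>k. (bc i *\<^sub>R x ^ i) * (bc (k - i) *\<^sub>R x ^ (k - i)))"
    unfolding sqs_def by (rule Cauchy_product[OF sqs_summable_norm[OF assms] sqs_summable_norm[OF assms]])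
  also have "\<dots> = (\<Sum>k. (\<Sum>i\<le>k. bc i * bc (k - i)) *\<^sub>R x ^ k)"
  proof (rule suminf_cong)
    fix k
    have "(\<Sum>i\<le>k. (bc i *\<^sub>R x ^ i) * (bc (k - i) *\<^sub>R x ^ (k - i))) = (\<Sum>i\<le>k. (bc i * bc (k - i)) *\<^sub>R x ^ k)"
      by (intro sum.cong refl) (simp add: power_add[symmetric])
    also have "\<dots> = (\<Sum>i\<le>k. bc i * bc (k - i)) *\<^sub>R x ^ k" by (simp add: scaleR_sum_left)
    finally show "(\<Sum>i\<le>k. (bc i *\<^sub>R x ^ i) * (bc (k - i) *\<^sub>R x ^ (k - i))) = (\<Sum>i\<le>k. bc i * bc (k - i)) *\<^sub>R x ^ k" .
  qed
  also have "\<dots> = (\<Sum>k. (if k = 0 then 1 else if k = 1 then -1 else 0) *\<^sub>R x ^ k)"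
    by (simp only: bc_conv)
  also have "\<dots> = (\<Sum>k\<in>{0,1}. (if k = 0 then 1 else if k = 1 then -1 else 0) *\<^sub>R x ^ k)"
    by (rule sums_unique[symmetric], rule sums_finite) auto
  also have "\<dots> = 1 - x" by simp
  finally show ?thesis .
qed

lemma sqs_bound:
  assumes "norm (x::'a::ucstar) \<le> 1" shows "norm (1 - sqs x) \<le> 1"
proof -
  have s: "summable (\<lambda>n. bc n *\<^sub>R x ^ n)" by (rule sqs_summable[OF assms])
  have sn: "summable (\<lambda>n. norm (bc (Suc n) *\<^sub>R x ^ Suc n))"
    using sqs_summable_norm[OF assms] by (subst summable_Suc_iff)
  have "(\<Sum>n. bc (Suc n) *\<^sub>R x ^ Suc n) = sqs x - 1"
    unfolding sqs_def using suminf_split_head[OF s] by simp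
  hence "1 - sqs x = - (\<Sum>n. bc (Suc n) *\<^sub>R x ^ Suc n)" by simp
  hence "norm (1 - sqs x) = norm (\<Sum>n. bc (Suc n) *\<^sub>R x ^ Suc n)" by simp
  also have "\<dots> \<le> (\<Sum>n. norm (bc (Suc n) *\<^sub>R x ^ Suc n))" by (rule summable_norm[OF sn])
  also have "\<dots> \<le> (\<Sum>n. \<bar>bc (Suc n)\<bar>)"
  proof (rule suminf_le[OF _ sn summable_abs_bc_Suc])
    fix n
    have "norm (x ^ Suc n) \<le> 1"
      using norm_power_ineq[of x "Suc n"] power_le_one[OF norm_ge_zero assms, of "Suc n"] by linarith
    thus "norm (bc (Suc n) *\<^sub>R x ^ Suc n) \<le> \<bar>bc (Suc n)\<bar>"
      by (simp add: mult_left_le[OF _ abs_ge_zero])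
  qed
  also have "\<dots> \<le> 1" by (rule suminf_abs_bc_Suc)
  finally show ?thesis .
qed

lemma sqs_cstar:
  assumes "norm (x::'a::ucstar) \<le> 1" shows "cstar (sqs x) = sqs (cstar x)"
proof -
  have "cstar (sqs x) = (\<Sum>n. cstar (bc n *\<^sub>R x ^ n))"
    unfolding sqs_def by (rule bounded_linear.suminf[OF bounded_linear_cstar sqs_summable[OF assms]])
  also have "\<dots> = sqs (cstar x)" unfolding sqs_def by (simp add: cstar_scaleR cstar_power)
  finally show ?thesis .
qed

lemma sqs_sa: "sa x \<Longrightarrow> norm (x::'a::ucstar) \<le> 1 \<Longrightarrow> sa (sqs x)"
  by (simp add: sa_def sqs_cstar)

lemma comm_power: "x * w = w * x \<Longrightarrow> (x::'a::ring_1) ^ n * w = w * x ^ n"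
proof (induction n)
  case (Suc n)
  have "x ^ Suc n * w = x * (x ^ n * w)" by (simp add: mult.assoc)
  also have "\<dots> = (x * w) * x ^ n" using Suc.IH[OF Suc.prems] by (simp only: mult.assoc)
  also have "\<dots> = w * (x * x ^ n)" using Suc.prems by (simp only: mult.assoc)
  also have "\<dots> = w * x ^ Suc n" by simp
  finally show ?case .
qed simp

lemma sqs_comm:
  assumes "norm (x::'a::ucstar) \<le> 1" "x * w = w * x" shows "sqs x * w = w * sqs x"
proof -
  have s: "summable (\<lambda>n. bc n *\<^sub>R x ^ n)" by (rule sqs_summable[OF assms(1)])
  have "sqs x * w = (\<Sum>n. bc n *\<^sub>R x ^ n * w)" unfolding sqs_def by (rule suminf_mult2[OF s])
  also have "\<dots> = (\<Sum>n. w * (bc n *\<^sub>R x ^ n))"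
    using comm_power[OF assms(2)] by (simp add: mult_scaleR_left mult_scaleR_right)
  also have "\<dots> = w * sqs x" unfolding sqs_def by (rule suminf_mult[OF s])
  finally show ?thesis .
qed

lemma comm_mono:
  fixes u v :: "'a::cstar_algebra"
  assumes "sa u" "sa v" "u * v = v * u"
  shows "norm (u * u) \<le> norm (u * u + v * v)"
proof -
  define w where "w = u + \<i> *\<^sub>C v"
  have cw: "cstar w = u - \<i> *\<^sub>C v"
    using assms by (simp add: w_def cstar_add cstar_scaleC sa_def scaleC_minus_left)
  have e1: "u * (\<i> *\<^sub>C v) = \<i> *\<^sub>C (u * v)" by (rule mult_scaleC_right)
  have e2: "(\<i> *\<^sub>C v) * u = \<i> *\<^sub>C (u * v)" using assms(3) by (simp add: mult_scaleC_left)
  have e3: "(\<i> *\<^sub>C v) * (\<i> *\<^sub>C v) = - (v * v)"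
    by (simp add: mult_scaleC_left mult_scaleC_right scaleC_scaleC scaleC_minus_left scaleC_one)
  have "cstar w * w = (u - \<i> *\<^sub>C v) * (u + \<i> *\<^sub>C v)" by (subst cw) (simp add: w_def)
  also have "\<dots> = u * u + u * (\<i> *\<^sub>C v) - (\<i> *\<^sub>C v) * u - (\<i> *\<^sub>C v) * (\<i> *\<^sub>C v)"
    by (simp add: distrib_left left_diff_distrib)
  also have "\<dots> = u * u + v * v" by (simp only: e1 e2 e3) simp
  finally have A: "norm w ^ 2 = norm (u * u + v * v)" using cstar_identity[of w] by simp
  have "norm u \<le> norm w"
  proof -
  have "u + u = w + cstar w" by (subst cw) (simp add: w_def)
  hence "norm (u + u) \<le> 2 * norm w" using norm_triangle_ineq[of w "cstar w"] by simp
  moreover have "norm (u + u) = 2 * norm u" by (simp add: scaleR_2[symmetric])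
  ultimately have "norm u \<le> norm w" by simp
  thus ?thesis .
  qed
  hence "norm u ^ 2 \<le> norm w ^ 2" by (simp add: power_mono)
  thus ?thesis using A sa_norm_sq[OF assms(1)] by simp
qed


definition pos :: "'a::ucstar \<Rightarrow> bool" where
  "pos h \<longleftrightarrow> sa h \<and> (\<exists>t\<ge>0. norm (of_real t - h) \<le> t)"

definition inv_el :: "'a::ring_1 \<Rightarrow> bool" where
  "inv_el x \<longleftrightarrow> (\<exists>z. x * z = 1 \<and> z * x = 1)"

lemma of_real_comm: "of_real r * x = x * (of_real r :: 'a::real_algebra_1)"
  by (simp add: of_real_def)

lemma sa_mult_self: "sa k \<Longrightarrow> sa ((k::'a::cstar_algebra) * k)"
  by (simp add: sa_def cstar_mult)

lemma sa_scaleR: "sa k \<Longrightarrow> sa (c *\<^sub>R (k::'a::cstar_algebra))"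
  by (simp add: sa_def cstar_scaleR)

lemma sa_add: "sa k \<Longrightarrow> sa l \<Longrightarrow> sa (k + (l::'a::cstar_algebra))"
  by (simp add: sa_def cstar_add)

lemma sa_diff: "sa k \<Longrightarrow> sa l \<Longrightarrow> sa (k - (l::'a::cstar_algebra))"
  by (simp add: sa_def cstar_diff)

lemma sa_minus: "sa k \<Longrightarrow> sa (- (k::'a::cstar_algebra))"
  by (simp add: sa_def cstar_minus)

lemma sa_of_real: "sa (of_real t :: 'a::ucstar)"
  by (simp add: sa_def cstar_of_real)

lemma sa_one: "sa (1 :: 'a::ucstar)"
  by (simp add: sa_def cstar_one)

lemma sq_bound:
  fixes k :: "'a::ucstar"
  assumes "sa k"
  shows "norm (of_real (norm k ^ 2) - k * k) \<le> norm k ^ 2"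
proof (cases "k = 0")
  case True thus ?thesis by simp
next
  case False
  define m where "m = norm k"
  have mpos: "m > 0" using False by (simp add: m_def)
  define j where "j = (1 / m) *\<^sub>R k"
  have saj: "sa j" using assms by (simp add: j_def sa_scaleR)
  have nj: "norm j = 1" using mpos by (simp add: j_def m_def)
  define x where "x = j * j"
  have sax: "sa x" using saj by (simp add: x_def sa_mult_self)
  have nx: "norm x = 1" using sa_norm_sq[OF saj] nj by (simp add: x_def)
  define s where "s = sqs x"
  have ss: "s * s = 1 - x" using sqs_sq[of x] nx by (simp add: s_def)
  have sas: "sa s" using sqs_sa[OF sax] nx by (simp add: s_def)
  have xj: "x * j = j * x" by (simp add: x_def mult.assoc)
  have sj: "s * j = j * s" using sqs_comm[OF _ xj] nx by (simp add: s_def)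
  have "norm (s * s) \<le> norm (s * s + j * j)" by (rule comm_mono[OF sas saj sj])
  also have "s * s + j * j = 1" by (simp add: ss x_def)
  finally have n1: "norm (1 - x) \<le> 1" by (simp add: ss)
  have kk: "k = m *\<^sub>R j" using mpos by (simp add: j_def)
  have "of_real (m ^ 2) - k * k = (m ^ 2) *\<^sub>R (1 - x)"
    by (simp add: kk x_def of_real_def scaleR_diff_right power2_eq_square)
  hence "norm (of_real (m ^ 2) - k * k) = m ^ 2 * norm (1 - x)" by simp
  also have "\<dots> \<le> m ^ 2" using n1 by (simp add: mult_left_le)
  finally show ?thesis by (simp add: m_def)
qed

lemma pos_sq: "sa k \<Longrightarrow> pos ((k::'a::ucstar) * k)"
proof -
  assume "sa k"
  thus ?thesis unfolding pos_def using sq_bound[of k]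
    by (intro conjI sa_mult_self exI[of _ "norm k ^ 2"]) simp_all
qed

lemma pos_sa: "pos h \<Longrightarrow> sa h" by (simp add: pos_def)

lemma pos_0: "pos (0::'a::ucstar)"
  unfolding pos_def by (auto simp: sa_def intro!: exI[of _ 0])

lemma pos_of_real: "t \<ge> 0 \<Longrightarrow> pos (of_real t :: 'a::ucstar)"
  unfolding pos_def by (auto simp: sa_of_real intro!: exI[of _ t])

lemma pos_add: assumes "pos p" "pos (q::'a::ucstar)" shows "pos (p + q)"
proof -
  obtain s where s: "s \<ge> 0" "norm (of_real s - p) \<le> s" using assms(1) by (auto simp: pos_def)
  obtain t where t: "t \<ge> 0" "norm (of_real t - q) \<le> t" using assms(2) by (auto simp: pos_def)
  have "norm (of_real (s + t) - (p + q)) = norm ((of_real s - p) + (of_real t - q))"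
    by (simp add: algebra_simps)
  also have "\<dots> \<le> s + t" using s t norm_triangle_ineq[of "of_real s - p" "of_real t - q"] by simp
  finally show ?thesis using assms s t by (auto simp: pos_def sa_add intro!: exI[of _ "s + t"])
qed

lemma pos_scaleR: assumes "pos p" "c \<ge> 0" shows "pos (c *\<^sub>R (p::'a::ucstar))"
proof -
  obtain s where s: "s \<ge> 0" "norm (of_real s - p) \<le> s" using assms(1) by (auto simp: pos_def)
  have "norm (of_real (c * s) - c *\<^sub>R p) = c * norm (of_real s - p)"
  proof -
    have "of_real (c * s) - c *\<^sub>R p = c *\<^sub>R (of_real s - p :: 'a)"
      by (simp add: of_real_def scaleR_diff_right)
    thus ?thesis using assms(2) by simp
  qed
  also have "\<dots> \<le> c * s" using s assms(2) by (simp add: mult_left_mono)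
  finally show ?thesis using assms s by (auto simp: pos_def sa_scaleR intro!: exI[of _ "c * s"])
qed

lemma pos_norm_minus: "sa h \<Longrightarrow> pos (of_real (norm h) - (h::'a::ucstar))"
  unfolding pos_def by (auto simp: sa_diff sa_of_real intro!: exI[of _ "norm h"])

lemma pos_one_minus: "sa y \<Longrightarrow> norm y \<le> 1 \<Longrightarrow> pos (1 - (y::'a::ucstar))"
  unfolding pos_def by (auto simp: sa_diff sa_one intro!: exI[of _ 1])

lemma pos_sqrt:
  fixes h :: "'a::ucstar"
  assumes "pos h"
  shows "\<exists>g. sa g \<and> g * g = h \<and> (\<forall>w. h * w = w * h \<longrightarrow> g * w = w * g)"
proof -
  obtain t where t: "t \<ge> 0" "norm (of_real t - h) \<le> t" and sah: "sa h"
    using assms by (auto simp: pos_def)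
  show ?thesis
  proof (cases "t = 0")
    case True
    hence "h = 0" using t by simp
    thus ?thesis by (intro exI[of _ 0]) (simp add: sa_def)
  next
    case False
    hence tp: "t > 0" using t by simp
    define x where "x = (1 / t) *\<^sub>R (of_real t - h)"
    have nx: "norm x \<le> 1" using t tp by (simp add: x_def divide_le_eq_1)
    have sax: "sa x" unfolding x_def by (intro sa_scaleR sa_diff sa_of_real sah)
    define g where "g = sqrt t *\<^sub>R sqs x"
    have "g * g = (sqrt t * sqrt t) *\<^sub>R (sqs x * sqs x)" by (simp add: g_def)
    also have "\<dots> = t *\<^sub>R (1 - x)" using sqs_sq[OF nx] t by simp
    also have "\<dots> = h" using tp by (simp add: x_def scaleR_diff_right of_real_def)
    finally have gg: "g * g = h" .
    have sag: "sa g" unfolding g_def by (intro sa_scaleR sqs_sa sax nx)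
    have "g * w = w * g" if hw: "h * w = w * h" for w
    proof -
      have "x * w = w * x" using hw by (simp add: x_def algebra_simps of_real_comm)
      hence "sqs x * w = w * sqs x" by (rule sqs_comm[OF nx])
      thus ?thesis by (simp add: g_def)
    qed
    thus ?thesis using gg sag by blast
  qed
qed

lemma pos_mult_comm:
  fixes p q :: "'a::ucstar"
  assumes "pos p" "pos q" "p * q = q * p" shows "pos (p * q)"
proof -
  obtain g1 where g1: "sa g1" "g1 * g1 = p" "\<forall>w. p * w = w * p \<longrightarrow> g1 * w = w * g1"
    using pos_sqrt[OF assms(1)] by blast
  obtain g2 where g2: "sa g2" "g2 * g2 = q" "\<forall>w. q * w = w * q \<longrightarrow> g2 * w = w * g2"
    using pos_sqrt[OF assms(2)] by blast
  have c1: "g1 * q = q * g1" using g1(3) assms(3) by blast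
  have c2: "g2 * g1 = g1 * g2" using g2(3) c1 by metis
  have "p * q = (g1 * g2) * (g1 * g2)"
    by (metis g1(2) g2(2) c2 mult.assoc)
  moreover have "sa (g1 * g2)" using g1(1) g2(1) c2 by (simp add: sa_def cstar_mult)
  ultimately show ?thesis using pos_sq by metis
qed

lemma pos_power: "pos y \<Longrightarrow> pos ((y::'a::ucstar) ^ n)"
proof (induction n)
  case 0 thus ?case using pos_of_real[of 1] by simp
next
  case (Suc n)
  thus ?case using pos_mult_comm[OF Suc.prems Suc.IH[OF Suc.prems]] by (simp add: power_commutes)
qed

lemma pos_sum: "(\<And>i. i \<in> A \<Longrightarrow> pos (f i)) \<Longrightarrow> pos (sum f A :: 'a::ucstar)"
proof (induction A rule: infinite_finite_induct)
  case (infinite A) thus ?case by (simp add: pos_0)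
next
  case empty thus ?case by (simp add: pos_0)
next
  case (insert x F) thus ?case by (simp add: pos_add)
qed

lemma pos_mono_comm:
  fixes p q :: "'a::ucstar"
  assumes "pos p" "pos q" "p * q = q * p" shows "norm p \<le> norm (p + q)"
proof -
  obtain g1 where g1: "sa g1" "g1 * g1 = p" "\<forall>w. p * w = w * p \<longrightarrow> g1 * w = w * g1"
    using pos_sqrt[OF assms(1)] by blast
  obtain g2 where g2: "sa g2" "g2 * g2 = q" "\<forall>w. q * w = w * q \<longrightarrow> g2 * w = w * g2"
    using pos_sqrt[OF assms(2)] by blast
  have c1: "g1 * q = q * g1" using g1(3) assms(3) by blast
  have c2: "g1 * g2 = g2 * g1" using g2(3) c1 by metis
  show ?thesis using comm_mono[OF g1(1) g2(1) c2] g1(2) g2(2) by simp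
qed

lemma pos_le_bound:
  fixes p :: "'a::ucstar"
  assumes "pos p" "pos (of_real l - p)" shows "norm p \<le> l"
proof -
  have "pos (p + (of_real l - p))" by (rule pos_add[OF assms])
  hence "pos (of_real l :: 'a)" by simp
  then obtain t where "t \<ge> 0" "norm (of_real t - of_real l :: 'a) \<le> t" by (auto simp: pos_def)
  hence "\<bar>t - l\<bar> \<le> t" by (metis norm_of_real of_real_diff)
  hence l0: "l \<ge> 0" by simp
  have "p * (of_real l - p) = (of_real l - p) * p" by (simp add: algebra_simps of_real_comm)
  hence "norm p \<le> norm (p + (of_real l - p))" by (rule pos_mono_comm[OF assms])
  thus ?thesis using l0 by simp
qed

lemma pos_norm_bound: "pos p \<Longrightarrow> norm (of_real (norm p) - p) \<le> norm (p::'a::ucstar)"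
proof -
  assume "pos p"
  then obtain g where g: "sa g" "g * g = p" using pos_sqrt by blast
  show ?thesis using sq_bound[OF g(1)] sa_norm_sq[OF g(1)] g(2) by simp
qed

lemma pos_mono:
  fixes p q :: "'a::ucstar"
  assumes "pos p" "pos q" shows "norm p \<le> norm (p + q)"
proof -
  have "pos (of_real (norm (p + q)) - (p + q) + q)"
    by (intro pos_add pos_norm_minus assms sa_add pos_sa)
  hence "pos (of_real (norm (p + q)) - p :: 'a)" by (simp add: algebra_simps)
  thus ?thesis by (rule pos_le_bound[OF assms(1)])
qed


lemma neumann:
  fixes q :: "'a::ucstar"
  assumes "norm q < 1" shows "inv_el (1 - q)"
proof -
  have sn: "summable (\<lambda>n. norm q ^ n)" by (rule summable_geometric) (use assms in simp)
  have s: "summable (\<lambda>n. q ^ n)"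
    by (rule summable_comparison_test'[OF sn, of 0]) (simp add: norm_power_ineq)
  define S where "S = (\<Sum>n. q ^ n)"
  have h: "(\<Sum>n. q ^ Suc n) = S - 1" unfolding S_def using suminf_split_head[OF s] by simp
  have "q * S = (\<Sum>n. q * q ^ n)" unfolding S_def by (rule suminf_mult[OF s, symmetric])
  also have "\<dots> = S - 1" using h by simp
  finally have l: "(1 - q) * S = 1" by (simp add: left_diff_distrib)
  have "S * q = (\<Sum>n. q ^ n * q)" unfolding S_def by (rule suminf_mult2[OF s])
  also have "\<dots> = S - 1" using h by (simp add: power_commutes)
  finally have r: "S * (1 - q) = 1" by (simp add: right_diff_distrib)
  show ?thesis unfolding inv_el_def using l r by blast
qed

lemma inv_el_mult: "inv_el x \<Longrightarrow> inv_el y \<Longrightarrow> inv_el ((x::'a::ring_1) * y)"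
proof -
  assume "inv_el x" "inv_el y"
  then obtain zx zy where zx: "x * zx = 1" "zx * x = 1" and zy: "y * zy = 1" "zy * y = 1"
    by (auto simp: inv_el_def)
  have "(x * y) * (zy * zx) = x * (y * zy) * zx" by (simp add: mult.assoc)
  also have "\<dots> = 1" using zx zy by simp
  finally have 1: "(x * y) * (zy * zx) = 1" .
  have "(zy * zx) * (x * y) = zy * (zx * x) * y" by (simp add: mult.assoc)
  also have "\<dots> = 1" using zx zy by simp
  finally have 2: "(zy * zx) * (x * y) = 1" .
  show ?thesis unfolding inv_el_def using 1 2 by blast
qed

lemma inv_el_scaleR: "c \<noteq> 0 \<Longrightarrow> inv_el x \<Longrightarrow> inv_el (c *\<^sub>R (x::'a::real_algebra_1))"
proof -
  assume c: "c \<noteq> 0" and "inv_el x"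
  then obtain z where z: "x * z = 1" "z * x = 1" by (auto simp: inv_el_def)
  have "(c *\<^sub>R x) * ((1/c) *\<^sub>R z) = 1" "((1/c) *\<^sub>R z) * (c *\<^sub>R x) = 1" using z c by simp_all
  thus ?thesis unfolding inv_el_def by blast
qed

lemma inv_comm: "x * z = 1 \<Longrightarrow> z * x = 1 \<Longrightarrow> x * w = w * x \<Longrightarrow> z * w = w * (z::'a::ring_1)"
proof -
  assume a: "x * z = 1" "z * x = 1" "x * w = w * x"
  have "z * w = z * w * (x * z)" using a by simp
  also have "\<dots> = z * (w * x) * z" by (simp add: mult.assoc)
  also have "\<dots> = z * (x * w) * z" using a by simp
  also have "\<dots> = (z * x) * w * z" by (simp add: mult.assoc)
  also have "\<dots> = w * z" using a by simp
  finally show ?thesis .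
qed

lemma jacobson:
  assumes "inv_el (1 + p * (q::'a::ring_1))" shows "inv_el (1 + q * p)"
proof -
  obtain z where z: "(1 + p * q) * z = 1" "z * (1 + p * q) = 1" using assms by (auto simp: inv_el_def)
  have "(1 + q * p) * (1 - q * z * p) = 1 + q * p - q * ((1 + p * q) * z) * p"
    by (simp add: algebra_simps)
  also have "\<dots> = 1" using z by simp
  finally have 1: "(1 + q * p) * (1 - q * z * p) = 1" .
  have "(1 - q * z * p) * (1 + q * p) = 1 + q * p - q * (z * (1 + p * q)) * p"
    by (simp add: algebra_simps)
  also have "\<dots> = 1" using z by simp
  finally have 2: "(1 - q * z * p) * (1 + q * p) = 1" .
  show ?thesis unfolding inv_el_def using 1 2 by blast
qed

lemma geom_telescope: "(1 - y) * (\<Sum>n<N. y ^ n) = 1 - (y::'a::ring_1) ^ N"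
proof (induction N)
  case (Suc N)
  have "(1 - y) * (\<Sum>n<Suc N. y ^ n) = (1 - y) * (\<Sum>n<N. y ^ n) + (1 - y) * y ^ N"
    by (simp add: distrib_left)
  also have "\<dots> = 1 - y ^ N + (y ^ N - y * y ^ N)" using Suc by (simp add: left_diff_distrib)
  finally show ?case by simp
qed simp

lemma pos_power_norm: "pos y \<Longrightarrow> norm y = 1 \<Longrightarrow> norm ((y::'a::ucstar) ^ n) = 1"
proof -
  assume "pos y" "norm y = 1"
  then obtain g where g: "sa g" "g * g = y" using pos_sqrt by blast
  have ng: "norm g ^ 2 = 1" using sa_norm_sq[OF g(1)] g(2) \<open>norm y = 1\<close> by simp
  have "y ^ n = g ^ (2 * n)" using g(2) by (simp add: power_mult power2_eq_square)
  hence "norm (y ^ n) = norm g ^ (2 * n)" using sa_norm_power[OF g(1), of "2 * n"] by simp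
  also have "\<dots> = (norm g ^ 2) ^ n" by (simp add: power_mult)
  finally have "norm (y ^ n) = (norm g ^ 2) ^ n" .
  thus ?thesis using ng by simp
qed

lemma not_inv_one_minus:
  fixes y :: "'a::ucstar"
  assumes py: "pos y" and ny: "norm y = 1"
  shows "\<not> inv_el (1 - y)"
proof
  assume "inv_el (1 - y)"
  then obtain z where z: "z * (1 - y) = 1" by (auto simp: inv_el_def)
  have upper: "norm (\<Sum>n<N. y ^ n) \<le> 2 * norm z" for N
  proof -
    have "(\<Sum>n<N. y ^ n) = z * ((1 - y) * (\<Sum>n<N. y ^ n))" using z by (simp add: mult.assoc[symmetric])
    also have "\<dots> = z * (1 - y ^ N)" by (simp add: geom_telescope)
    finally have a: "norm (\<Sum>n<N. y ^ n) \<le> norm z * norm (1 - y ^ N)" by (simp add: norm_mult_ineq)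
    have "norm (1 - y ^ N) \<le> 2"
      using norm_triangle_ineq4[of 1 "y ^ N"] pos_power_norm[OF py ny, of N] by simp
    hence "norm z * norm (1 - y ^ N) \<le> norm z * 2" by (simp add: mult_left_mono)
    thus ?thesis using a by linarith
  qed
  have lower: "real (Suc M) \<le> norm (\<Sum>n<Suc M. y ^ n)" for M
  proof -
    define Q where "Q = (\<Sum>n<Suc M. y ^ n * (1 - y ^ (M - n)))"
    have eq: "(\<Sum>n<Suc M. y ^ n) = real (Suc M) *\<^sub>R y ^ M + Q"
    proof -
      have "Q = (\<Sum>n<Suc M. y ^ n - y ^ M)"
        unfolding Q_def by (intro sum.cong refl) (simp add: right_diff_distrib power_add[symmetric])
      also have "\<dots> = (\<Sum>n<Suc M. y ^ n) - real (Suc M) *\<^sub>R y ^ M"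
        by (simp add: sum_subtractf scaleR_conv_of_real)
      finally show ?thesis by simp
    qed
    have pQ: "pos Q" unfolding Q_def
    proof (rule pos_sum)
      fix n assume "n \<in> {..<Suc M}"
      have sk: "sa (y ^ (M - n))" using pos_sa[OF py] by (rule sa_power)
      have "norm (y ^ (M - n)) \<le> 1" using pos_power_norm[OF py ny] by simp
      hence p2: "pos (1 - y ^ (M - n))" by (rule pos_one_minus[OF sk])
      have "y ^ n * (1 - y ^ (M - n)) = (1 - y ^ (M - n)) * y ^ n"
        by (simp add: algebra_simps power_add[symmetric] add.commute)
      thus "pos (y ^ n * (1 - y ^ (M - n)))" by (rule pos_mult_comm[OF pos_power[OF py] p2])
    qed
    have pM: "pos (real (Suc M) *\<^sub>R y ^ M)" by (rule pos_scaleR[OF pos_power[OF py]]) simp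
    have cQ: "(real (Suc M) *\<^sub>R y ^ M) * Q = Q * (real (Suc M) *\<^sub>R y ^ M)"
    proof -
      have "y ^ M * Q = Q * y ^ M" unfolding Q_def sum_distrib_left sum_distrib_right
        by (intro sum.cong refl) (simp add: algebra_simps power_add[symmetric] add.commute)
      thus ?thesis by simp
    qed
    have "norm (real (Suc M) *\<^sub>R y ^ M) \<le> norm (\<Sum>n<Suc M. y ^ n)"
      using pos_mono_comm[OF pM pQ cQ] eq by simp
    thus ?thesis using pos_power_norm[OF py ny, of M] by simp
  qed
  define M where "M = nat \<lceil>2 * norm z\<rceil>"
  have "real (Suc M) \<le> 2 * norm z" using lower[of M] upper[of "Suc M"] by linarith
  moreover have "2 * norm z \<le> real M" unfolding M_def by linarith
  ultimately show False by simp
qed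


lemma pos_crit:
  fixes h :: "'a::ucstar"
  assumes sah: "sa h" and inv: "\<And>l. l > 0 \<Longrightarrow> inv_el (h + of_real l)"
  shows "pos h"
proof (cases "h = 0")
  case True thus ?thesis by (simp add: pos_0)
next
  case False
  define c where "c = norm h"
  have cpos: "c > 0" using False by (simp add: c_def)
  define h' where "h' = (1 / c) *\<^sub>R h"
  have sah': "sa h'" using sah by (simp add: h'_def sa_scaleR)
  have nh': "norm h' = 1" using cpos by (simp add: h'_def c_def)
  have bound: "norm (1 - h') \<le> 1"
  proof (rule ccontr)
    assume "\<not> norm (1 - h') \<le> 1"
    hence kg: "norm (1 - h') > 1" by simp
    define k where "k = 1 - h'"
    define \<kappa> where "\<kappa> = norm k"
    have kap: "\<kappa> > 1" using kg by (simp add: \<kappa>_def k_def)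
    have sak: "sa k" unfolding k_def by (intro sa_diff sa_one sah')
    define y where "y = (1 / \<kappa>\<^sup>2) *\<^sub>R (k * k)"
    have py: "pos y" unfolding y_def by (intro pos_scaleR pos_sq sak) simp
    have "k \<noteq> 0" using kap by (auto simp: \<kappa>_def)
    hence ny: "norm y = 1" using sa_norm_sq[OF sak] kap by (simp add: y_def \<kappa>_def)
    have "inv_el (of_real \<kappa> - k)"
    proof -
      have "of_real \<kappa> - k = (1 / c) *\<^sub>R (h + of_real ((\<kappa> - 1) * c))"
        using cpos by (simp add: k_def h'_def scaleR_add_right of_real_def algebra_simps)
      moreover have "inv_el (h + of_real ((\<kappa> - 1) * c))" using kap cpos by (intro inv) simp
      ultimately show ?thesis using cpos by (simp add: inv_el_scaleR)
    qed
    moreover have "inv_el (of_real \<kappa> + k)"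
    proof -
      have "of_real \<kappa> + k = (\<kappa> + 1) *\<^sub>R (1 - (1 / (\<kappa> + 1)) *\<^sub>R h')"
        using kap by (simp add: k_def of_real_def scaleR_diff_right algebra_simps)
      moreover have "inv_el (1 - (1 / (\<kappa> + 1)) *\<^sub>R h')"
        by (rule neumann) (use kap nh' in simp)
      ultimately show ?thesis using kap by (simp add: inv_el_scaleR)
    qed
    ultimately have "inv_el ((of_real \<kappa> - k) * (of_real \<kappa> + k))" by (rule inv_el_mult)
    moreover have "(of_real \<kappa> - k) * (of_real \<kappa> + k) = \<kappa>\<^sup>2 *\<^sub>R (1 - y)"
      using kap by (simp add: y_def algebra_simps of_real_comm scaleR_diff_right power2_eq_square
          of_real_def)
    ultimately have "inv_el (\<kappa>\<^sup>2 *\<^sub>R (1 - y))" by simp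
    hence "inv_el ((1 / \<kappa>\<^sup>2) *\<^sub>R (\<kappa>\<^sup>2 *\<^sub>R (1 - y)))" using kap by (rule_tac inv_el_scaleR) simp_all
    hence "inv_el (1 - y)" using kap by simp
    thus False using not_inv_one_minus[OF py ny] by simp
  qed
  have "of_real c - h = c *\<^sub>R (1 - h')" using cpos by (simp add: h'_def of_real_def scaleR_diff_right)
  hence "norm (of_real c - h) \<le> c" using bound cpos by (simp add: mult_left_le)
  thus ?thesis using sah cpos unfolding pos_def by (intro conjI exI[of _ c]) simp_all
qed

lemma half_add1: "(1/2::real) *\<^sub>R a + (1/2::real) *\<^sub>R a = (a::'a::real_vector)"
  by (simp add: scaleR_add_left[symmetric])
lemma half_add2: "(1/2::real) *\<^sub>R a + ((1/2::real) *\<^sub>R a + c) = (a::'a::real_vector) + c"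
  by (simp add: add.assoc[symmetric] half_add1)

lemma quarter_add1: "(1/4::real) *\<^sub>R a + (1/4::real) *\<^sub>R a = (1/2::real) *\<^sub>R (a::'a::real_vector)"
  by (simp add: scaleR_add_left[symmetric])
lemma quarter_add2: "(1/4::real) *\<^sub>R a + ((1/4::real) *\<^sub>R a + c) = (1/2::real) *\<^sub>R (a::'a::real_vector) + c"
  by (simp add: add.assoc[symmetric] quarter_add1)

lemma kaplansky1:
  fixes x :: "'a::ucstar"
  assumes nx: "norm x = 1" and p: "pos (- (cstar x * x))"
  shows False
proof -
  define h where "h = (1/2::real) *\<^sub>R (x + cstar x)"
  define k where "k = (- \<i> / 2) *\<^sub>C (x - cstar x)"
  have sah: "sa h" by (simp add: h_def sa_def cstar_scaleR cstar_add cstar_cstar add.commute)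
  have sak: "sa k"
    by (simp add: k_def sa_def cstar_scaleC cstar_diff cstar_cstar scaleC_diff_right
        scaleC_minus_left)
  have hh: "h * h = (1/4::real) *\<^sub>R ((x + cstar x) * (x + cstar x))"
    by (simp add: h_def)
  have kk: "k * k = (- 1/4::real) *\<^sub>R ((x - cstar x) * (x - cstar x))"
    by (simp add: k_def mult_scaleC_left mult_scaleC_right scaleC_scaleC scaleR_scaleC)
  have "x * cstar x = 2 *\<^sub>R (h * h) + 2 *\<^sub>R (k * k) + (- (cstar x * x))"
    unfolding hh kk by (simp add: algebra_simps scaleR_diff_right) (simp add: half_add1 half_add2)
  moreover have "pos (2 *\<^sub>R (h * h) + 2 *\<^sub>R (k * k) + (- (cstar x * x)))"
    by (intro pos_add pos_scaleR pos_sq sah sak p) simp_all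
  ultimately have pb: "pos (x * cstar x)" by simp
  have nb: "norm (x * cstar x) = 1" using nx by (simp add: norm_mult_cstar)
  have "norm (1 - x * cstar x) \<le> 1" using pos_norm_bound[OF pb] nb by simp
  hence "inv_el (1 - (1/2::real) *\<^sub>R (1 - x * cstar x))" by (intro neumann) simp
  hence "inv_el (2 *\<^sub>R (1 - (1/2::real) *\<^sub>R (1 - x * cstar x)))" by (intro inv_el_scaleR) simp_all
  moreover have "2 *\<^sub>R (1 - (1/2::real) *\<^sub>R (1 - x * cstar x)) = 1 + x * cstar x"
    by (simp add: scaleR_diff_right scaleR_2)
  ultimately have "inv_el (1 + x * cstar x)" by simp
  hence "inv_el (1 + cstar x * x)" by (rule jacobson)
  hence "inv_el (1 - (- (cstar x * x)))" by simp
  moreover have "norm (- (cstar x * x)) = 1" using nx by (simp add: cstar_identity)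
  ultimately show False using not_inv_one_minus[OF p] by blast
qed

lemma kaplansky:
  fixes x :: "'a::ucstar"
  assumes p: "pos (- (cstar x * x))"
  shows "x = 0"
proof (rule ccontr)
  assume "x \<noteq> 0"
  hence np: "norm x > 0" by simp
  define x' where "x' = (1 / norm x) *\<^sub>R x"
  have n1: "norm x' = 1" using np by (simp add: x'_def)
  have "- (cstar x' * x') = (1 / norm x ^ 2) *\<^sub>R (- (cstar x * x))"
    by (simp add: x'_def cstar_scaleR power2_eq_square)
  moreover have "pos ((1 / norm x ^ 2) *\<^sub>R (- (cstar x * x)))" using p by (rule pos_scaleR) simp
  ultimately have "pos (- (cstar x' * x'))" by simp
  with n1 show False by (rule kaplansky1)
qed

lemma pos_cstar_mult1:
  fixes b :: "'a::ucstar"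
  assumes nb: "norm b = 1"
  shows "pos (cstar b * b)"
proof -
  define h where "h = cstar b * b"
  have sah: "sa h" by (simp add: h_def sa_def cstar_mult cstar_cstar)
  have nh: "norm h = 1" using nb by (simp add: h_def cstar_identity)
  define x where "x = 1 - h * h"
  have nx: "norm x \<le> 1" using sq_bound[OF sah] nh by (simp add: x_def)
  have sax: "sa x" unfolding x_def by (intro sa_diff sa_one sa_mult_self sah)
  define g where "g = sqs x"
  have gg: "g * g = h * h" using sqs_sq[OF nx] by (simp add: g_def x_def)
  have sag: "sa g" using sqs_sa[OF sax nx] by (simp add: g_def)
  have g1: "norm (1 - g) \<le> 1" using sqs_bound[OF nx] by (simp add: g_def)
  have gh: "g * h = h * g"
  proof -
    have "x * h = h * x" by (simp add: x_def algebra_simps mult.assoc)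
    thus ?thesis using sqs_comm[OF nx] by (simp add: g_def)
  qed
  define v where "v = (1/2::real) *\<^sub>R (g - h)"
  have sav: "sa v" unfolding v_def by (intro sa_scaleR sa_diff sag sah)
  have hv: "h = g - 2 *\<^sub>R v" by (simp add: v_def)
  have gv: "g * v = v * g" using gh by (simp add: v_def algebra_simps)
  have vv: "v * v = g * v"
  proof -
    have "v * v = (1/4::real) *\<^sub>R (g * g - g * h - h * g + h * h)"
      by (simp add: v_def algebra_simps)
    also have "\<dots> = (1/2::real) *\<^sub>R (h * h - g * h)" using gg gh
      by (simp add: algebra_simps) (simp add: quarter_add1 quarter_add2)
    also have "\<dots> = g * v" using gg by (simp add: v_def algebra_simps)
    finally show ?thesis .
  qed
  have pv: "pos v"
  proof (rule pos_crit[OF sav])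
    fix l :: real assume lp: "l > 0"
    have "of_real l + g = (1 + l) *\<^sub>R (1 - (1 / (1 + l)) *\<^sub>R (1 - g))"
      using lp by (simp add: of_real_def scaleR_diff_right algebra_simps)
    moreover have "inv_el (1 - (1 / (1 + l)) *\<^sub>R (1 - g))"
      by (rule neumann) (use lp g1 in \<open>simp add: divide_le_eq_1 mult_le_one\<close>)
    ultimately have "inv_el (of_real l + g)" using lp by (simp add: inv_el_scaleR)
    then obtain z where z: "(of_real l + g) * z = 1" "z * (of_real l + g) = 1"
      by (auto simp: inv_el_def)
    have Lg: "(of_real l + g) * v = v * (of_real l + g)"
      by (simp only: distrib_left distrib_right gv of_real_comm)
    have zv: "z * v = v * z" by (rule inv_comm[OF z Lg])
    have vLv: "(v + of_real l) * v = (of_real l + g) * v"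
      by (simp only: distrib_right vv add.commute)
    have c1: "(v + of_real l) * z = z * (v + of_real l)"
      by (simp only: distrib_left distrib_right zv of_real_comm)
    have e1: "(v + of_real l) * (1 - z * v) = of_real l"
    proof -
      have "(v + of_real l) * (1 - z * v) = (v + of_real l) - ((v + of_real l) * z) * v"
        by (simp only: right_diff_distrib mult_1_right mult.assoc)
      also have "((v + of_real l) * z) * v = (z * (of_real l + g)) * v"
        by (simp only: c1 mult.assoc vLv)
      also have "\<dots> = v" using z by simp
      finally show ?thesis by simp
    qed
    have e2: "(1 - z * v) * (v + of_real l) = of_real l"
    proof -
      have "(1 - z * v) * (v + of_real l) = (v + of_real l) - z * (v * (v + of_real l))"
        by (simp only: left_diff_distrib mult_1_left mult.assoc)
      also have "v * (v + of_real l) = (v + of_real l) * v"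
        by (simp only: distrib_left distrib_right of_real_comm)
      also have "z * ((v + of_real l) * v) = (z * (of_real l + g)) * v"
        by (simp only: mult.assoc vLv)
      also have "\<dots> = v" using z by simp
      finally show ?thesis by simp
    qed
    have "(v + of_real l) * ((1 / l) *\<^sub>R (1 - z * v)) = 1" using e1 lp by (simp add: of_real_def)
    moreover have "((1 / l) *\<^sub>R (1 - z * v)) * (v + of_real l) = 1" using e2 lp by (simp add: of_real_def)
    ultimately show "inv_el (v + of_real l)" unfolding inv_el_def by blast
  qed
  define y where "y = b * v"
  have "cstar y * y = v * h * v" by (simp add: y_def cstar_mult sav[unfolded sa_def] h_def mult.assoc)
  also have "\<dots> = - (v * v * v)"
  proof -
    have "v * h * v = v * g * v - 2 *\<^sub>R (v * v * v)" by (simp add: hv algebra_simps)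
    also have "v * g * v = v * v * v" by (simp add: gv[symmetric] vv mult.assoc)
    also have "v * v * v - 2 *\<^sub>R (v * v * v) = - (v * v * v)" by (simp add: scaleR_2)
    finally show ?thesis .
  qed
  finally have "- (cstar y * y) = v * v * v" by simp
  moreover have "pos (v * v * v)"
    using pos_power[OF pv, of 3] by (simp add: numeral_3_eq_3 mult.assoc)
  ultimately have "y = 0" using kaplansky by metis
  hence "v * v * v = 0" using \<open>- (cstar y * y) = v * v * v\<close> by simp
  hence "(v * v) * (v * v) = 0" by (metis mult.assoc mult_zero_left)
  hence "norm (v * v) = 0" using sa_norm_sq[OF sa_mult_self[OF sav]] by simp
  hence "norm v = 0" using sa_norm_sq[OF sav] by simp
  hence "v = 0" by simp
  hence "g = h" by (simp add: v_def)
  hence "pos h" using g1 sag unfolding pos_def by (intro conjI exI[of _ 1]) simp_all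
  thus ?thesis by (simp add: h_def)
qed

lemma pos_cstar_mult: "pos (cstar b * (b::'a::ucstar))"
proof (cases "b = 0")
  case True thus ?thesis by (simp add: pos_0)
next
  case False
  hence np: "norm b > 0" by simp
  define b' where "b' = (1 / norm b) *\<^sub>R b"
  have "norm b' = 1" using np by (simp add: b'_def)
  hence "pos (cstar b' * b')" by (rule pos_cstar_mult1)
  hence "pos ((norm b)\<^sup>2 *\<^sub>R (cstar b' * b'))" by (rule pos_scaleR) simp
  moreover have "(norm b)\<^sup>2 *\<^sub>R (cstar b' * b') = cstar b * b"
    using np by (simp add: b'_def cstar_scaleR power2_eq_square)
  ultimately show ?thesis by simp
qed

lemma cstar_mono:
  fixes b c :: "'a::ucstar"
  shows "norm (cstar b * b) \<le> norm (cstar b * b + cstar c * c)"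
  by (rule pos_mono[OF pos_cstar_mult pos_cstar_mult])


datatype 'a unitz = UZ (usc: complex) (uvec: 'a)

lemma unitz_eqI: "usc x = usc y \<Longrightarrow> uvec x = uvec y \<Longrightarrow> x = y"
  by (cases x, cases y) simp

instantiation unitz :: (cstar_algebra) ring_1
begin
definition "0 = UZ 0 0"
definition "1 = UZ 1 0"
definition "x + y = UZ (usc x + usc y) (uvec x + uvec y)"
definition "x - y = UZ (usc x - usc y) (uvec x - uvec y)"
definition "- x = UZ (- usc x) (- uvec x)"
definition "x * y = UZ (usc x * usc y) (usc x *\<^sub>C uvec y + usc y *\<^sub>C uvec x + uvec x * uvec y)"
instance
proof
  fix a b c :: "'a unitz"
  show "a + b + c = a + (b + c)" by (simp add: plus_unitz_def add.assoc)
  show "a + b = b + a" by (simp add: plus_unitz_def add.commute)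
  show "0 + a = a" by (simp add: plus_unitz_def zero_unitz_def)
  show "- a + a = 0" by (simp add: plus_unitz_def zero_unitz_def uminus_unitz_def)
  show "a - b = a + - b" by (simp add: plus_unitz_def minus_unitz_def uminus_unitz_def)
  show "a * b * c = a * (b * c)"
    by (simp add: times_unitz_def algebra_simps scaleC_add_right mult_scaleC_left mult_scaleC_right scaleC_scaleC)
  show "1 * a = a" by (simp add: times_unitz_def one_unitz_def scaleC_one)
  show "a * 1 = a" by (simp add: times_unitz_def one_unitz_def scaleC_one)
  show "(a + b) * c = a * c + b * c"
    by (simp add: times_unitz_def plus_unitz_def algebra_simps scaleC_add_right scaleC_add_left)
  show "a * (b + c) = a * b + a * c"
    by (simp add: times_unitz_def plus_unitz_def algebra_simps scaleC_add_right scaleC_add_left)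
  show "(0::'a unitz) \<noteq> 1" by (simp add: zero_unitz_def one_unitz_def)
qed
end

lemma usc_simps[simp]: "usc 0 = 0" "usc 1 = 1" "usc (x + y) = usc x + usc y" "usc (x - y) = usc x - usc y"
  "usc (- x) = - usc x" "usc (x * y) = usc x * usc y"
  by (simp_all add: zero_unitz_def one_unitz_def plus_unitz_def minus_unitz_def uminus_unitz_def times_unitz_def)

lemma uvec_simps[simp]: "uvec (0::'a::cstar_algebra unitz) = 0" "uvec (1::'a::cstar_algebra unitz) = 0"
  "uvec (x + y) = uvec x + uvec y" "uvec (x - y) = uvec x - uvec y"
  "uvec (- x) = - uvec x" "uvec (x * y) = usc x *\<^sub>C uvec y + usc y *\<^sub>C uvec x + uvec x * uvec y"
  by (simp_all add: zero_unitz_def one_unitz_def plus_unitz_def minus_unitz_def uminus_unitz_def times_unitz_def)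

instantiation unitz :: (cstar_algebra) complex_vec
begin
definition "scaleC_unitz c x = UZ (c * usc x) (c *\<^sub>C uvec x)"
instance
  by standard (simp_all add: scaleC_unitz_def plus_unitz_def scaleC_add_right scaleC_add_left
      scaleC_scaleC scaleC_one algebra_simps)
end

lemma usc_scaleC[simp]: "usc (c *\<^sub>C x) = c * usc x" and uvec_scaleC[simp]: "uvec (c *\<^sub>C x) = c *\<^sub>C uvec x"
  by (simp_all add: scaleC_unitz_def)

instantiation unitz :: (cstar_algebra) real_algebra_1
begin
definition "scaleR_unitz r (x::'a unitz) = complex_of_real r *\<^sub>C x"
instance
proof
  fix a b :: real and x y :: "'a unitz"
  show "a *\<^sub>R (x + y) = a *\<^sub>R x + a *\<^sub>R y" by (simp add: scaleR_unitz_def scaleC_add_right)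
  show "(a + b) *\<^sub>R x = a *\<^sub>R x + b *\<^sub>R x" by (simp add: scaleR_unitz_def scaleC_add_left)
  show "a *\<^sub>R b *\<^sub>R x = (a * b) *\<^sub>R x" by (simp add: scaleR_unitz_def scaleC_scaleC)
  show "1 *\<^sub>R x = x" by (simp add: scaleR_unitz_def scaleC_one)
  show "a *\<^sub>R x * y = a *\<^sub>R (x * y)"
    by (rule unitz_eqI) (simp_all add: scaleR_unitz_def scaleC_add_right mult_scaleC_left
        mult_scaleC_right scaleC_scaleC mult.commute)
  show "x * a *\<^sub>R y = a *\<^sub>R (x * y)"
    by (rule unitz_eqI) (simp_all add: scaleR_unitz_def scaleC_add_right mult_scaleC_left
        mult_scaleC_right scaleC_scaleC mult.commute algebra_simps)
qed
end


definition uL :: "'a::cstar_algebra unitz \<Rightarrow> 'a \<Rightarrow> 'a" where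
  "uL x y = usc x *\<^sub>C y + uvec x * y"

definition lnorm :: "'a::cstar_algebra unitz \<Rightarrow> real" where
  "lnorm x = (SUP y\<in>{y. norm y \<le> 1}. norm (uL x y))"

definition ucs :: "'a::cstar_algebra unitz \<Rightarrow> 'a unitz" where
  "ucs x = UZ (cnj (usc x)) (cstar (uvec x))"

lemma uL_bound: "norm y \<le> 1 \<Longrightarrow> norm (uL x y) \<le> cmod (usc x) + norm (uvec x)"
proof -
  assume y: "norm y \<le> 1"
  have "norm (uL x y) \<le> norm (usc x *\<^sub>C y) + norm (uvec x * y)"
    unfolding uL_def by (rule norm_triangle_ineq)
  also have "\<dots> \<le> cmod (usc x) * norm y + norm (uvec x) * norm y"
    by (intro add_mono) (simp_all add: norm_scaleC norm_mult_ineq)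
  also have "\<dots> \<le> cmod (usc x) + norm (uvec x)"
    using y by (intro add_mono mult_left_le) simp_all
  finally show ?thesis .
qed

lemma lnorm_bdd: "bdd_above ((\<lambda>y. norm (uL x y)) ` {y. norm y \<le> 1})"
  by (rule bdd_aboveI[of _ "cmod (usc x) + norm (uvec x)"]) (auto intro: uL_bound)

lemma lnorm_ge: "norm y \<le> 1 \<Longrightarrow> norm (uL x y) \<le> lnorm x"
  unfolding lnorm_def by (rule cSUP_upper[OF _ lnorm_bdd]) simp

lemma lnorm_le: "(\<And>y. norm y \<le> 1 \<Longrightarrow> norm (uL x y) \<le> M) \<Longrightarrow> lnorm x \<le> M"
  unfolding lnorm_def by (rule cSUP_least) (auto intro: exI[of _ 0])

lemma lnorm_nonneg: "lnorm x \<ge> 0"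
  using lnorm_ge[of 0 x] by (simp add: uL_def)

lemma uL_scaleR: "uL x (r *\<^sub>R y) = r *\<^sub>R uL x y"
  by (simp add: uL_def scaleR_scaleC scaleC_scaleC scaleC_add_right mult_scaleC_right mult.commute)

lemma uL_gen: "norm (uL x y) \<le> lnorm x * norm y"
proof (cases "y = 0")
  case True thus ?thesis by (simp add: uL_def)
next
  case False
  define y' where "y' = (1 / norm y) *\<^sub>R y"
  have "norm y' \<le> 1" using False by (simp add: y'_def)
  hence "norm (uL x y') \<le> lnorm x" by (rule lnorm_ge)
  moreover have "uL x y = norm y *\<^sub>R uL x y'" using False by (simp add: y'_def uL_scaleR)
  ultimately show ?thesis using False by (simp add: mult.commute mult_left_mono)
qed

lemma uL_add: "uL (x + x') y = uL x y + uL x' y"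
  by (simp add: uL_def scaleC_add_left algebra_simps)

lemma uL_scaleC: "uL (c *\<^sub>C x) y = c *\<^sub>C uL x y"
  by (simp add: uL_def scaleC_add_right mult_scaleC_left scaleC_scaleC)

lemma uL_mult: "uL (x * x') y = uL x (uL x' y)"
  by (simp add: uL_def scaleC_add_right scaleC_add_left mult_scaleC_left mult_scaleC_right
      scaleC_scaleC algebra_simps)

lemma lnorm_triangle: "lnorm (x + x') \<le> lnorm x + lnorm x'"
proof (rule lnorm_le)
  fix y :: 'a assume y: "norm y \<le> 1"
  have "norm (uL (x + x') y) \<le> norm (uL x y) + norm (uL x' y)"
    unfolding uL_add by (rule norm_triangle_ineq)
  also have "\<dots> \<le> lnorm x + lnorm x'" using y by (intro add_mono lnorm_ge)
  finally show "norm (uL (x + x') y) \<le> lnorm x + lnorm x'" .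
qed

lemma lnorm_scaleC_le: "lnorm (c *\<^sub>C x) \<le> cmod c * lnorm x"
proof (rule lnorm_le)
  fix y :: 'a assume y: "norm y \<le> 1"
  show "norm (uL (c *\<^sub>C x) y) \<le> cmod c * lnorm x"
    unfolding uL_scaleC norm_scaleC using lnorm_ge[OF y] by (simp add: mult_left_mono)
qed

lemma lnorm_scaleC: "lnorm (c *\<^sub>C x) = cmod c * lnorm x"
proof (cases "c = 0")
  case True
  have "lnorm (c *\<^sub>C x) \<le> 0" using lnorm_scaleC_le[of c x] True by simp
  thus ?thesis using True lnorm_nonneg[of "c *\<^sub>C x"] by simp
next
  case False
  have "lnorm x = lnorm (inverse c *\<^sub>C (c *\<^sub>C x))" using False by (simp add: scaleC_scaleC scaleC_one)
  also have "\<dots> \<le> cmod (inverse c) * lnorm (c *\<^sub>C x)" by (rule lnorm_scaleC_le)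
  finally have "lnorm x \<le> lnorm (c *\<^sub>C x) / cmod c"
    by (simp add: norm_inverse divide_inverse mult.commute)
  hence "cmod c * lnorm x \<le> lnorm (c *\<^sub>C x)" using False
    by (simp add: pos_le_divide_eq mult.commute)
  thus ?thesis using lnorm_scaleC_le[of c x] by simp
qed

lemma lnorm_mult: "lnorm (x * x') \<le> lnorm x * lnorm x'"
proof (rule lnorm_le)
  fix y :: 'a assume y: "norm y \<le> 1"
  have "norm (uL (x * x') y) \<le> lnorm x * norm (uL x' y)" unfolding uL_mult by (rule uL_gen)
  also have "\<dots> \<le> lnorm x * lnorm x'" using lnorm_ge[OF y] by (simp add: mult_left_mono lnorm_nonneg)
  finally show "norm (uL (x * x') y) \<le> lnorm x * lnorm x'" .
qed

lemma ucs_ucs: "ucs (ucs x) = x"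
  by (simp add: ucs_def cstar_cstar)

lemma uL_cstar_identity: "cstar (uL x y) * uL x y = cstar y * uL (ucs x * x) y"
  by (simp add: uL_def ucs_def cstar_add cstar_scaleC cstar_mult scaleC_add_right scaleC_add_left
      mult_scaleC_left mult_scaleC_right scaleC_scaleC algebra_simps mult.commute[of "cnj _"])

lemma lnorm_sq_le: "lnorm x ^ 2 \<le> lnorm (ucs x * x)"
proof -
  have "lnorm x \<le> sqrt (lnorm (ucs x * x))"
  proof (rule lnorm_le)
    fix y :: 'a assume y: "norm y \<le> 1"
    have "norm (uL x y) ^ 2 = norm (cstar y * uL (ucs x * x) y)"
      by (simp add: cstar_identity[symmetric] uL_cstar_identity)
    also have "\<dots> \<le> norm y * norm (uL (ucs x * x) y)"
      using norm_mult_ineq[of "cstar y"] by simp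
    also have "\<dots> \<le> norm y * (lnorm (ucs x * x) * norm y)"
      by (rule mult_left_mono[OF uL_gen]) simp
    also have "\<dots> \<le> lnorm (ucs x * x)"
    proof -
      have "norm y * norm y \<le> 1" using y by (simp add: mult_le_one)
      hence "lnorm (ucs x * x) * (norm y * norm y) \<le> lnorm (ucs x * x)"
        using lnorm_nonneg[of "ucs x * x"] by (simp add: mult_left_le)
      thus ?thesis by (simp add: algebra_simps)
    qed
    finally show "norm (uL x y) \<le> sqrt (lnorm (ucs x * x))" by (simp add: real_le_rsqrt)
  qed
  hence "lnorm x ^ 2 \<le> (sqrt (lnorm (ucs x * x))) ^ 2" using lnorm_nonneg[of x] by (rule power_mono)
  thus ?thesis using lnorm_nonneg[of "ucs x * x"] by simp
qed

lemma lnorm_ucs: "lnorm (ucs x) = lnorm x"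
proof -
  have le: "lnorm z \<le> lnorm (ucs z)" for z :: "'a unitz"
  proof (cases "lnorm z = 0")
    case True thus ?thesis using lnorm_nonneg[of "ucs z"] by simp
  next
    case False
    have "lnorm z * lnorm z \<le> lnorm (ucs z) * lnorm z"
      using lnorm_sq_le[of z] lnorm_mult[of "ucs z" z] by (simp add: power2_eq_square)
    thus ?thesis using False lnorm_nonneg[of z] by (simp add: mult_le_cancel_right)
  qed
  show ?thesis using le[of x] le[of "ucs x"] by (simp add: ucs_ucs)
qed

lemma lnorm_cstar_identity: "lnorm (ucs x * x) = lnorm x ^ 2"
  using lnorm_sq_le[of x] lnorm_mult[of "ucs x" x] by (simp add: lnorm_ucs power2_eq_square)

lemma lnorm_vec: "lnorm (UZ 0 a) = norm a"
proof (rule order.antisym)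
  show "lnorm (UZ 0 a) \<le> norm a"
    by (rule lnorm_le) (simp add: uL_def, metis norm_mult_ineq mult_left_le norm_ge_zero order_trans)
  show "norm a \<le> lnorm (UZ 0 a)"
  proof (cases "a = 0")
    case True thus ?thesis by (simp add: lnorm_nonneg)
  next
    case False
    define y where "y = (1 / norm a) *\<^sub>R cstar a"
    have "norm y \<le> 1" using False by (simp add: y_def)
    hence "norm (uL (UZ 0 a) y) \<le> lnorm (UZ 0 a)" by (rule lnorm_ge)
    moreover have "norm (uL (UZ 0 a) y) = norm a" using False
      by (simp add: uL_def y_def norm_mult_cstar power2_eq_square)
    ultimately show ?thesis by simp
  qed
qed

lemma vec_bound: "norm (uvec x) \<le> lnorm x + cmod (usc x)"
proof (cases "uvec x = 0")
  case True thus ?thesis by (simp add: lnorm_nonneg)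
next
  case False
  define a where "a = uvec x"
  define l where "l = usc x"
  have ap: "norm a > 0" using False by (simp add: a_def)
  define y where "y = (1 / norm a) *\<^sub>R cstar a"
  have "norm y \<le> 1" using ap by (simp add: y_def)
  hence A: "norm (uL x y) \<le> lnorm x" by (rule lnorm_ge)
  have "uL x y = (1 / norm a) *\<^sub>R (l *\<^sub>C cstar a + a * cstar a)"
    unfolding y_def uL_scaleR by (simp add: uL_def a_def l_def)
  hence "norm (uL x y) = (1 / norm a) * norm (l *\<^sub>C cstar a + a * cstar a)" using ap by simp
  moreover have "norm (l *\<^sub>C cstar a + a * cstar a) \<ge> norm a ^ 2 - cmod l * norm a"
    using norm_triangle_ineq2[of "a * cstar a" "- (l *\<^sub>C cstar a)"]
    by (simp add: norm_mult_cstar norm_scaleC add.commute)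
  ultimately have "norm (uL x y) \<ge> (1 / norm a) * (norm a ^ 2 - cmod l * norm a)"
    using ap by (simp add: divide_right_mono)
  also have "(1 / norm a) * (norm a ^ 2 - cmod l * norm a) = norm a - cmod l"
    using ap by (simp add: field_simps power2_eq_square)
  finally show ?thesis using A by (simp add: a_def l_def)
qed


lemma lnorm_zero: "lnorm (0::'a::cstar_algebra unitz) = 0"
  using lnorm_vec[of "0::'a"] by (simp add: zero_unitz_def)

lemma lnorm_le_sum: "lnorm x \<le> cmod (usc x) + norm (uvec x)"
  by (rule lnorm_le) (rule uL_bound)

instantiation unitz :: (cstar_algebra) real_normed_algebra_1
begin
definition norm_unitz :: "'a unitz \<Rightarrow> real" where "norm_unitz x = max (cmod (usc x)) (lnorm x)"
definition sgn_unitz_def: "sgn (x::'a unitz) = x /\<^sub>R norm x"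
definition dist_unitz_def: "dist (x::'a unitz) y = norm (x - y)"
definition uniformity_unitz_def [code del]:
  "(uniformity :: ('a unitz \<times> 'a unitz) filter) = (INF e\<in>{0 <..}. principal {(x, y). dist x y < e})"
definition open_unitz_def [code del]:
  "open (U :: 'a unitz set) \<longleftrightarrow> (\<forall>x\<in>U. eventually (\<lambda>(x', y). x' = x \<longrightarrow> y \<in> U) uniformity)"
instance
proof
  fix r :: real and x y :: "'a unitz"
  show "(norm x = 0) = (x = 0)"
  proof
    assume "norm x = 0"
    hence "usc x = 0" "lnorm x = 0" using lnorm_nonneg[of x] by (auto simp: norm_unitz_def max_def split: if_splits)
    moreover have "x = UZ (usc x) (uvec x)" by simp
    ultimately have "norm (uvec x) = 0" using lnorm_vec[of "uvec x"] by metis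
    thus "x = 0" using \<open>usc x = 0\<close> by (intro unitz_eqI) simp_all
  qed (simp add: norm_unitz_def lnorm_zero)
  show "norm (x + y) \<le> norm x + norm y"
    using norm_triangle_ineq[of "usc x" "usc y"] lnorm_triangle[of x y]
    by (simp add: norm_unitz_def max_def)
  show "norm (r *\<^sub>R x) = \<bar>r\<bar> * norm x"
    by (simp add: norm_unitz_def scaleR_unitz_def lnorm_scaleC norm_mult max_mult_distrib_left)
  show "norm (x * y) \<le> norm x * norm y"
  proof -
    have "cmod (usc x * usc y) \<le> norm x * norm y"
      by (simp add: norm_mult norm_unitz_def mult_mono' lnorm_nonneg)
    moreover have "lnorm (x * y) \<le> norm x * norm y"
      using lnorm_mult[of x y] by (rule order_trans)
        (simp add: norm_unitz_def mult_mono' lnorm_nonneg)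
    ultimately show ?thesis by (simp add: norm_unitz_def)
  qed
  show "norm (1::'a unitz) = 1"
  proof -
    have "lnorm (1::'a unitz) \<le> 1" by (rule lnorm_le) (simp add: uL_def scaleC_one)
    thus ?thesis by (simp add: norm_unitz_def)
  qed
qed (rule sgn_unitz_def dist_unitz_def open_unitz_def uniformity_unitz_def)+
end

lemma usc_le_norm: "cmod (usc x) \<le> norm x"
  by (simp add: norm_unitz_def)

lemma uvec_le_norm: "norm (uvec x) \<le> 2 * norm x"
  using vec_bound[of x] by (simp add: norm_unitz_def)

lemma norm_le_sum: "norm x \<le> cmod (usc x) + norm (uvec x)"
  using lnorm_le_sum[of x] by (simp add: norm_unitz_def)

instance unitz :: (cstar_algebra) banach
proof
  fix X :: "nat \<Rightarrow> 'a unitz"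
  assume C: "Cauchy X"
  have "Cauchy (\<lambda>n. usc (X n))"
  proof (rule CauchyI)
    fix e :: real assume "e > 0"
    then obtain M where "\<forall>m\<ge>M. \<forall>n\<ge>M. norm (X m - X n) < e" using CauchyD[OF C] by blast
    moreover have "norm (usc (X m) - usc (X n)) \<le> norm (X m - X n)" for m n
      using usc_le_norm[of "X m - X n"] by simp
    ultimately show "\<exists>M. \<forall>m\<ge>M. \<forall>n\<ge>M. norm (usc (X m) - usc (X n)) < e"
      by (meson le_less_trans)
  qed
  then obtain l where l: "(\<lambda>n. usc (X n)) \<longlonglongrightarrow> l" using Cauchy_convergent_iff convergent_def by blast
  have "Cauchy (\<lambda>n. uvec (X n))"
  proof (rule CauchyI)
    fix e :: real assume "e > 0"
    then obtain M where M: "\<forall>m\<ge>M. \<forall>n\<ge>M. norm (X m - X n) < e / 2" using CauchyD[OF C, of "e/2"] by auto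
    have "norm (uvec (X m) - uvec (X n)) < e" if "m \<ge> M" "n \<ge> M" for m n
    proof -
      have "norm (uvec (X m) - uvec (X n)) \<le> 2 * norm (X m - X n)"
        using uvec_le_norm[of "X m - X n"] by simp
      moreover have "norm (X m - X n) < e / 2" using M that by blast
      ultimately show ?thesis by linarith
    qed
    thus "\<exists>M. \<forall>m\<ge>M. \<forall>n\<ge>M. norm (uvec (X m) - uvec (X n)) < e" by blast
  qed
  then obtain a where a: "(\<lambda>n. uvec (X n)) \<longlonglongrightarrow> a" using Cauchy_convergent_iff convergent_def by blast
  have l0: "(\<lambda>n. cmod (usc (X n) - l)) \<longlonglongrightarrow> 0" using l by (simp add: tendsto_norm_zero_iff LIM_zero_iff)
  have a0: "(\<lambda>n. norm (uvec (X n) - a)) \<longlonglongrightarrow> 0" using a by (simp add: tendsto_norm_zero_iff LIM_zero_iff)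
  have "(\<lambda>n. norm (X n - UZ l a)) \<longlonglongrightarrow> 0"
  proof (rule real_tendsto_sandwich[of "\<lambda>n. 0" _ _ "\<lambda>n. cmod (usc (X n) - l) + norm (uvec (X n) - a)"])
    show "\<forall>\<^sub>F n in sequentially. 0 \<le> norm (X n - UZ l a)" by simp
    show "\<forall>\<^sub>F n in sequentially. norm (X n - UZ l a) \<le> cmod (usc (X n) - l) + norm (uvec (X n) - a)"
    proof (intro always_eventually allI)
      fix n show "norm (X n - UZ l a) \<le> cmod (usc (X n) - l) + norm (uvec (X n) - a)"
        using norm_le_sum[of "X n - UZ l a"] by simp
    qed
    show "(\<lambda>n. 0) \<longlonglongrightarrow> (0::real)" by simp
    show "(\<lambda>n. cmod (usc (X n) - l) + norm (uvec (X n) - a)) \<longlonglongrightarrow> 0"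
      using tendsto_add[OF l0 a0] by simp
  qed
  hence "X \<longlonglongrightarrow> UZ l a" by (simp add: tendsto_norm_zero_iff LIM_zero_iff)
  thus "convergent X" by (auto simp: convergent_def)
qed


lemma max_sq: "(a::real) \<ge> 0 \<Longrightarrow> b \<ge> 0 \<Longrightarrow> max (a ^ 2) (b ^ 2) = (max a b) ^ 2"
proof (cases "a \<le> b")
  case True
  assume "a \<ge> 0" "b \<ge> 0"
  hence "a ^ 2 \<le> b ^ 2" using True by (simp add: power_mono)
  thus ?thesis using True by (simp add: max_def)
next
  case False
  assume "a \<ge> 0" "b \<ge> 0"
  hence "b ^ 2 \<le> a ^ 2" using False by (simp add: power_mono)
  thus ?thesis using False by (simp add: max_def)
qed

instantiation unitz :: (cstar_algebra) cstar_algebra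
begin
definition cstar_unitz :: "'a unitz \<Rightarrow> 'a unitz" where "cstar_unitz = ucs"
instance
proof
  fix r :: real and c :: complex and x y :: "'a unitz"
  show "r *\<^sub>R x = complex_of_real r *\<^sub>C x" by (simp add: scaleR_unitz_def)
  show "norm (c *\<^sub>C x) = cmod c * norm x"
    by (simp add: norm_unitz_def lnorm_scaleC norm_mult max_mult_distrib_left)
  show "c *\<^sub>C x * y = c *\<^sub>C (x * y)"
    by (rule unitz_eqI) (simp_all add: scaleC_add_right mult_scaleC_left mult_scaleC_right scaleC_scaleC
        mult.commute)
  show "x * c *\<^sub>C y = c *\<^sub>C (x * y)"
    by (rule unitz_eqI) (simp_all add: scaleC_add_right mult_scaleC_left mult_scaleC_right scaleC_scaleC
        mult.commute algebra_simps)
  show "cstar (cstar x) = x" by (simp add: cstar_unitz_def ucs_ucs)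
  show "cstar (x + y) = cstar x + cstar y"
    by (rule unitz_eqI) (simp_all add: cstar_unitz_def ucs_def cstar_add)
  show "cstar (c *\<^sub>C x) = cnj c *\<^sub>C cstar x"
    by (rule unitz_eqI) (simp_all add: cstar_unitz_def ucs_def cstar_scaleC)
  show "cstar (x * y) = cstar y * cstar x"
    by (rule unitz_eqI) (simp_all add: cstar_unitz_def ucs_def cstar_scaleC cstar_add cstar_mult
        add.commute add.left_commute)
  show "norm (cstar x * x) = norm x ^ 2"
  proof -
    have "usc (cstar x) = cnj (usc x)" by (simp add: cstar_unitz_def ucs_def)
    hence "cmod (usc (cstar x * x)) = cmod (usc x) ^ 2"
      by (simp only: usc_simps norm_mult complex_mod_cnj power2_eq_square)
    moreover have "lnorm (cstar x * x) = lnorm x ^ 2" by (simp add: cstar_unitz_def lnorm_cstar_identity)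
    ultimately have "norm (cstar x * x) = max (cmod (usc x) ^ 2) (lnorm x ^ 2)"
      by (simp only: norm_unitz_def)
    also have "\<dots> = (max (cmod (usc x)) (lnorm x)) ^ 2"
      using lnorm_nonneg[of x] by (rule max_sq[OF norm_ge_zero])
    finally show ?thesis by (simp only: norm_unitz_def)
  qed
qed
end

instance unitz :: (cstar_algebra) ucstar ..

lemma norm_UZ0: "norm (UZ 0 a) = norm a"
  by (simp add: norm_unitz_def lnorm_vec)

lemma cstar_mono_gen:
  fixes b c :: "'a::cstar_algebra"
  shows "norm (cstar b * b) \<le> norm (cstar b * b + cstar c * c)"
proof -
  have e: "cstar (UZ 0 b) * UZ 0 b = UZ 0 (cstar b * b)" for b :: 'a
    by (rule unitz_eqI) (simp_all add: cstar_unitz_def ucs_def)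
  have "norm (cstar (UZ 0 b) * UZ 0 b) \<le> norm (cstar (UZ 0 b) * UZ 0 b + cstar (UZ 0 c) * UZ 0 c)"
    by (rule cstar_mono)
  also have "cstar (UZ 0 b) * UZ 0 b + cstar (UZ 0 c) * UZ 0 c = UZ 0 (cstar b * b + cstar c * c)"
    unfolding e by (rule unitz_eqI) simp_all
  finally show ?thesis unfolding e norm_UZ0 .
qed


locale hmod =
  fixes act :: "'a::cstar_algebra \<Rightarrow> 'x::complex_vec \<Rightarrow> 'x" and ip :: "'x \<Rightarrow> 'x \<Rightarrow> 'a"
  assumes hm: "hilbert_module act ip"
begin

lemma act_add_right: "act a (x + y) = act a x + act a y" using hm by (simp add: hilbert_module_def)
lemma act_add_left: "act (a + b) x = act a x + act b x" using hm by (simp add: hilbert_module_def)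
lemma act_scaleC1: "c *\<^sub>C (act a x) = act (c *\<^sub>C a) x" using hm by (simp add: hilbert_module_def)
lemma act_scaleC2: "act (c *\<^sub>C a) x = act a (c *\<^sub>C x)" using hm by (simp add: hilbert_module_def)
lemma ip_add: "ip (x + y) z = ip x z + ip y z" using hm by (simp add: hilbert_module_def)
lemma ip_scaleC: "ip (c *\<^sub>C x) y = c *\<^sub>C ip x y" using hm by (simp add: hilbert_module_def)
lemma ip_act: "ip (act a x) y = a * ip x y" using hm by (simp add: hilbert_module_def)
lemma ip_cstar: "cstar (ip x y) = ip y x" using hm by (simp add: hilbert_module_def)
lemma ip_pos: "cstar_pos (ip x x)" using hm by (simp add: hilbert_module_def)
lemma ip_zero_iff: "ip x x = 0 \<longleftrightarrow> x = 0" using hm by (simp add: hilbert_module_def)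
lemma complete_all: "\<forall>X::nat \<Rightarrow> 'x. (\<forall>e>0. \<exists>N. \<forall>m\<ge>N. \<forall>n\<ge>N. hnorm ip (X m - X n) < e) \<longrightarrow>
        (\<exists>l. \<forall>e>0. \<exists>N. \<forall>n\<ge>N. hnorm ip (X n - l) < e)"
  using hm unfolding hilbert_module_def by (elim conjE) assumption
lemma complete: fixes X :: "nat \<Rightarrow> 'x" assumes A: "\<forall>e>0. \<exists>N. \<forall>m\<ge>N. \<forall>n\<ge>N. hnorm ip (X m - X n) < e"
  shows "\<exists>l. \<forall>e>0. \<exists>N. \<forall>n\<ge>N. hnorm ip (X n - l) < e"
  by (rule mp[OF spec[OF complete_all, of X] A])

lemma act_scaleC_right: "act a (c *\<^sub>C x) = c *\<^sub>C act a x"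
  by (simp add: act_scaleC1 act_scaleC2)

lemma ip_zero_left: "ip 0 y = 0"
proof -
  have "ip 0 y = ip 0 y + ip 0 y" using ip_add[of 0 0 y] by simp
  thus ?thesis by simp
qed

lemma ip_minus_left: "ip (- x) y = - ip x y"
  using ip_add[of x "- x" y] ip_zero_left by (simp add: eq_neg_iff_add_eq_0 add.commute)

lemma ip_diff_left: "ip (x - y) z = ip x z - ip y z"
  using ip_add[of x "- y" z] by (simp add: ip_minus_left)

lemma ip_add_right: "ip x (y + z) = ip x y + ip x z"
  by (metis ip_cstar ip_add cstar_add)

lemma ip_diff_right: "ip x (y - z) = ip x y - ip x z"
  by (metis ip_cstar ip_diff_left cstar_diff)

lemma ip_zero_right: "ip x 0 = 0"
  by (metis ip_cstar ip_zero_left cstar_zero)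

lemma ip_scaleC_right: "ip x (c *\<^sub>C y) = cnj c *\<^sub>C ip x y"
  by (metis ip_cstar ip_scaleC cstar_scaleC)

lemma act_zero_right: "act a 0 = 0"
proof -
  have "act a 0 = act a 0 + act a 0" using act_add_right[of a 0 0] by simp
  thus ?thesis by simp
qed

lemma act_minus_right: "act a (- x) = - act a x"
  using act_add_right[of a x "- x"] act_zero_right by (simp add: eq_neg_iff_add_eq_0 add.commute)

lemma act_diff_right: "act a (x - y) = act a x - act a y"
  using act_add_right[of a x "- y"] by (simp add: act_minus_right)

lemma act_zero_left: "act 0 x = 0"
proof -
  have "act 0 x = act 0 x + act 0 x" using act_add_left[of 0 0 x] by simp
  thus ?thesis by simp
qed

lemma act_diff_left: "act (a - b) x = act a x - act b x"
proof -
  have "act (a - b) x + act b x = act a x" using act_add_left[of "a - b" b x] by simp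
  thus ?thesis by (simp add: eq_diff_eq)
qed

lemma ip_self_sa: "cstar (ip x x) = ip x x" by (rule ip_cstar)

lemma ip_act_act: "ip (act a x) (act a x) = a * ip x x * cstar a"
proof -
  have "ip (act a x) (act a x) = a * ip x (act a x)" by (rule ip_act)
  also have "ip x (act a x) = cstar (ip (act a x) x)" by (simp add: ip_cstar)
  also have "\<dots> = ip x x * cstar a" by (simp add: ip_act cstar_mult ip_cstar)
  finally show ?thesis by (simp add: mult.assoc)
qed

abbreviation hn where "hn \<equiv> hnorm ip"

lemma hn_nonneg: "hn x \<ge> 0" by (simp add: hnorm_def)
lemma hn_sq: "hn x ^ 2 = norm (ip x x)" by (simp add: hnorm_def)
lemma hn_zero_iff: "hn x = 0 \<longleftrightarrow> x = 0" by (simp add: hnorm_def ip_zero_iff)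
lemma hn_zero[simp]: "hn 0 = 0" by (simp add: hn_zero_iff)

lemma hn_scaleC: "hn (c *\<^sub>C x) = cmod c * hn x"
proof -
  have "ip (c *\<^sub>C x) (c *\<^sub>C x) = (c * cnj c) *\<^sub>C ip x x"
    by (simp add: ip_scaleC ip_scaleC_right scaleC_scaleC mult.commute)
  hence "norm (ip (c *\<^sub>C x) (c *\<^sub>C x)) = (cmod c)\<^sup>2 * norm (ip x x)"
    by (simp add: norm_scaleC norm_mult power2_eq_square)
  thus ?thesis by (simp add: hnorm_def real_sqrt_mult)
qed

lemma hn_minus: "hn (- x) = hn x"
  using hn_scaleC[of "-1" x] by (simp add: scaleC_minus_left scaleC_one)

lemma hn_diff_comm: "hn (x - y) = hn (y - x)"
  using hn_minus[of "x - y"] by simp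

lemma cauchy_schwarz: "norm (ip x y) \<le> hn x * hn y"
proof (cases "y = 0")
  case True thus ?thesis by (simp add: ip_zero_right)
next
  case False
  define a where "a = ip x y"
  define X where "X = norm (ip x x)"
  define Y where "Y = norm (ip y y)"
  have Yp: "Y > 0" using False by (simp add: Y_def ip_zero_iff)
  define t where "t = 1 / Y"
  have tp: "t > 0" using Yp by (simp add: t_def)
  define w where "w = act a y"
  define z where "z = x - complex_of_real t *\<^sub>C w"
  have wx: "ip w x = a * cstar a" by (simp add: w_def ip_act a_def ip_cstar)
  have xw: "ip x w = a * cstar a" by (metis wx ip_cstar cstar_mult cstar_cstar)
  have ww: "ip w w = a * ip y y * cstar a" by (simp add: w_def ip_act_act)
  have "ip z z = ip x x - complex_of_real t *\<^sub>C ip x w - complex_of_real t *\<^sub>C ip w x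
      + (complex_of_real t * complex_of_real t) *\<^sub>C ip w w"
    by (simp add: z_def ip_diff_left ip_diff_right ip_scaleC ip_scaleC_right scaleC_diff_right
        scaleC_scaleC algebra_simps)
  also have "\<dots> = ip x x - (2 * t) *\<^sub>R (a * cstar a) + (t * t) *\<^sub>R (a * ip y y * cstar a)"
    by (simp add: xw wx ww scaleR_scaleC scaleC_add_left[symmetric] algebra_simps)
  finally have zz: "ip z z = ip x x - (2 * t) *\<^sub>R (a * cstar a) + (t * t) *\<^sub>R (a * ip y y * cstar a)" .
  obtain b where b: "ip z z = cstar b * b" using ip_pos[of z] by (auto simp: cstar_pos_def)
  define b' where "b' = sqrt (2 * t) *\<^sub>R cstar a"
  have pb': "cstar b' * b' = (2 * t) *\<^sub>R (a * cstar a)"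
    using tp by (simp add: b'_def cstar_scaleR cstar_cstar)
  have "norm (cstar b' * b') \<le> norm (cstar b' * b' + cstar b * b)" by (rule cstar_mono_gen)
  also have "cstar b' * b' + cstar b * b = ip x x + (t * t) *\<^sub>R (a * ip y y * cstar a)"
    unfolding pb' b[symmetric] zz by simp
  also have "norm \<dots> \<le> X + (t * t) * (norm a * Y * norm a)"
  proof -
    have "norm (a * ip y y * cstar a) \<le> norm a * Y * norm a"
      using norm_mult_ineq[of "a * ip y y" "cstar a"] norm_mult_ineq[of a "ip y y"]
      by (simp add: Y_def) (metis mult_right_mono norm_ge_zero order_trans)
    hence "norm ((t * t) *\<^sub>R (a * ip y y * cstar a)) \<le> (t * t) * (norm a * Y * norm a)"
      using tp by (simp add: mult_left_mono)
    thus ?thesis using norm_triangle_ineq[of "ip x x" "(t * t) *\<^sub>R (a * ip y y * cstar a)"]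
      by (simp add: X_def)
  qed
  finally have F: "norm (cstar b' * b') \<le> X + t * t * (norm a * Y * norm a)" .
  have "norm (cstar b' * b') = 2 * t * norm a ^ 2" using tp by (simp add: pb' norm_mult_cstar)
  hence "2 * t * norm a ^ 2 \<le> X + t * t * (norm a * Y * norm a)" using F by simp
  hence "2 * norm a ^ 2 / Y \<le> X + norm a ^ 2 / Y"
    using Yp by (simp add: t_def field_simps power2_eq_square)
  hence "norm a ^ 2 \<le> X * Y" using Yp by (simp add: field_simps)
  hence "norm a \<le> sqrt (X * Y)" by (simp add: real_le_rsqrt)
  thus ?thesis by (simp add: a_def X_def Y_def hnorm_def real_sqrt_mult)
qed

lemma hn_triangle: "hn (x + y) \<le> hn x + hn y"
proof -
  have "hn (x + y) ^ 2 = norm (ip x x + ip x y + (ip y x + ip y y))"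
    by (simp add: hn_sq ip_add ip_add_right add_ac)
  also have "\<dots> \<le> norm (ip x x) + norm (ip x y) + (norm (ip y x) + norm (ip y y))"
    by (intro norm_triangle_le add_mono norm_triangle_ineq)
  also have "norm (ip y x) = norm (ip x y)" by (metis ip_cstar norm_cstar)
  also have "norm (ip x x) + norm (ip x y) + (norm (ip x y) + norm (ip y y)) \<le> (hn x + hn y) ^ 2"
    using cauchy_schwarz[of x y] unfolding power2_sum hn_sq by linarith
  finally have "hn (x + y) ^ 2 \<le> (hn x + hn y) ^ 2" .
  thus ?thesis by (rule power2_le_imp_le) (simp add: hn_nonneg add_nonneg_nonneg)
qed

lemma hn_triangle_diff: "hn (x - z) \<le> hn (x - y) + hn (y - z)"
  using hn_triangle[of "x - y" "y - z"] by simp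

lemma hn_act: "hn (act a x) \<le> norm a * hn x"
proof -
  have "norm (ip (act a x) (act a x)) \<le> norm a * norm (ip x x) * norm a"
    unfolding ip_act_act
    using norm_mult_ineq[of "a * ip x x" "cstar a"] norm_mult_ineq[of a "ip x x"]
    by (metis mult_right_mono norm_cstar norm_ge_zero order_trans)
  hence "hn (act a x) ^ 2 \<le> (norm a * hn x) ^ 2"
    unfolding power_mult_distrib hn_sq by (simp add: power2_eq_square algebra_simps)
  thus ?thesis by (rule power2_le_imp_le) (simp add: hn_nonneg)
qed

lemma ip_bound: "norm (ip x y - ip x' y') \<le> hn (x - x') * hn y + hn x' * hn (y - y')"
proof -
  have "ip x y - ip x' y' = ip (x - x') y + ip x' (y - y')"
    by (simp add: ip_diff_left ip_diff_right)
  hence "norm (ip x y - ip x' y') \<le> norm (ip (x - x') y) + norm (ip x' (y - y'))"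
    by (simp add: norm_triangle_ineq)
  thus ?thesis using cauchy_schwarz[of "x - x'" y] cauchy_schwarz[of x' "y - y'"] by linarith
qed

lemma act_bound: "hn (act a x - act a' x') \<le> norm (a - a') * hn x + norm a' * hn (x - x')"
proof -
  have "act a x - act a' x' = act (a - a') x + act a' (x - x')"
    by (simp add: act_diff_left act_diff_right)
  hence "hn (act a x - act a' x') \<le> hn (act (a - a') x) + hn (act a' (x - x'))"
    by (simp add: hn_triangle)
  thus ?thesis using hn_act[of "a - a'" x] hn_act[of a' "x - x'"] by linarith
qed

end


lemma le_zero_lim: assumes "\<And>n. c \<le> t n" "t \<longlonglongrightarrow> 0" shows "c \<le> (0::real)"
proof -
  have "(\<lambda>n. c) \<longlonglongrightarrow> c" by simp
  from tendsto_le[OF trivial_limit_sequentially assms(2) this] assms(1) show ?thesis by simp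
qed

lemma hn_zero_lim:
  assumes "\<And>n. hnorm ip v \<le> t n" "t \<longlonglongrightarrow> 0" "hmod act ip"
  shows "v = 0"
proof -
  interpret hmod act ip by fact
  have "hnorm ip v \<le> 0" using le_zero_lim[OF assms(1,2)] .
  hence "hnorm ip v = 0" using hn_nonneg[of v] by simp
  thus ?thesis by (simp add: hn_zero_iff)
qed

lemma half_pow: "((1/2::complex) ^ n) * 2 ^ n = 1"
  by (simp add: power_mult_distrib[symmetric])

lemma half_pow': "(2::complex) ^ n * (1/2) ^ n = 1"
  by (simp add: power_mult_distrib[symmetric])

lemma cmod_half_pow: "cmod ((1/2::complex) ^ n) = (1/2) ^ n"
  by (simp add: norm_power)

locale stab = X: hmod actA ipX + Y: hmod actB ipY
  for actA :: "'a::cstar_algebra \<Rightarrow> 'x::complex_vec \<Rightarrow> 'x" and ipX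
    and actB :: "'b::cstar_algebra \<Rightarrow> 'y::complex_vec \<Rightarrow> 'y" and ipY +
  fixes f :: "'x \<Rightarrow> 'y" and \<phi> :: "'x \<Rightarrow> 'x \<Rightarrow> 'x \<Rightarrow> real" and L :: real
  assumes phi_nonneg: "\<forall>x y z. \<phi> x y z \<ge> 0"
    and approx_add: "\<forall>\<mu> x y. cmod \<mu> = 1 \<longrightarrow>
           hnorm ipY (f (\<mu> *\<^sub>C x + y) - \<mu> *\<^sub>C f x - f y) \<le> \<phi> x y 0"
    and approx_hom: "\<forall>x y z. hnorm ipY (f (actA (ipX x y) z) - actB (ipY (f x) (f y)) (f z)) \<le> \<phi> x y z"
    and L0: "0 \<le> L" and L1: "L < 1"
    and phi_half: "\<forall>x y z. \<phi> x y z \<le> 2 * L * \<phi> ((1/2) *\<^sub>C x) ((1/2) *\<^sub>C y) ((1/2) *\<^sub>C z)"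
begin

abbreviation nY where "nY \<equiv> hnorm ipY"

lemma phi_scale: "\<phi> ((2::complex) ^ n *\<^sub>C x) (2 ^ n *\<^sub>C y) (2 ^ n *\<^sub>C z) \<le> (2 * L) ^ n * \<phi> x y z"
proof (induction n)
  case 0 thus ?case by (simp add: scaleC_one)
next
  case (Suc n)
  have e: "(1/2::complex) *\<^sub>C (2 ^ Suc n *\<^sub>C v) = 2 ^ n *\<^sub>C v" for v :: 'x
    by (simp add: scaleC_scaleC)
  have "\<phi> (2 ^ Suc n *\<^sub>C x) (2 ^ Suc n *\<^sub>C y) (2 ^ Suc n *\<^sub>C z)
      \<le> 2 * L * \<phi> (2 ^ n *\<^sub>C x) (2 ^ n *\<^sub>C y) (2 ^ n *\<^sub>C z)"
    using phi_half e by metis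
  also have "\<dots> \<le> 2 * L * ((2 * L) ^ n * \<phi> x y z)" using Suc L0 by (simp add: mult_left_mono)
  finally show ?case by simp
qed

definition g :: "nat \<Rightarrow> 'x \<Rightarrow> 'y" where "g n x = ((1/2::complex) ^ n) *\<^sub>C f ((2::complex) ^ n *\<^sub>C x)"

lemma g0: "g 0 x = f x" by (simp add: g_def scaleC_one)

lemma nY_scale_half: "nY (((1/2::complex) ^ n) *\<^sub>C v) = (1/2) ^ n * nY v"
  by (simp add: Y.hn_scaleC cmod_half_pow)

lemma step_bound: "nY (g n x - g (Suc n) x) \<le> L ^ n * \<phi> x x 0 / 2"
proof -
  define x' where "x' = (2::complex) ^ n *\<^sub>C x"
  have a: "nY (f (1 *\<^sub>C x' + x') - 1 *\<^sub>C f x' - f x') \<le> \<phi> x' x' 0" using approx_add by simp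
  have b: "1 *\<^sub>C x' + x' = (2::complex) ^ Suc n *\<^sub>C x"
    by (simp add: x'_def scaleC_one scaleC_2[symmetric] scaleC_scaleC)
  have "\<phi> x' x' 0 \<le> (2 * L) ^ n * \<phi> x x 0" using phi_scale[of n x x 0] by (simp add: x'_def)
  hence c: "nY (f ((2::complex) ^ Suc n *\<^sub>C x) - f x' - f x') \<le> (2 * L) ^ n * \<phi> x x 0"
    using a b by (simp add: scaleC_one)
  have "g n x - g (Suc n) x = ((1/2::complex) ^ Suc n) *\<^sub>C (f x' + f x' - f ((2::complex) ^ Suc n *\<^sub>C x))"
    by (simp add: g_def x'_def scaleC_diff_right scaleC_add_right scaleC_scaleC scaleC_2[symmetric])
  moreover have "nY (f x' + f x' - f ((2::complex) ^ Suc n *\<^sub>C x)) = nY (f ((2::complex) ^ Suc n *\<^sub>C x) - f x' - f x')"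
    by (simp only: Y.hn_diff_comm[of "f x' + f x'"] diff_diff_eq)
  ultimately have "nY (g n x - g (Suc n) x) = (1/2) ^ Suc n * nY (f ((2::complex) ^ Suc n *\<^sub>C x) - f x' - f x')"
    by (simp only: nY_scale_half)
  also have "\<dots> \<le> (1/2) ^ Suc n * ((2 * L) ^ n * \<phi> x x 0)" by (rule mult_left_mono[OF c]) simp
  also have "\<dots> = L ^ n * \<phi> x x 0 / 2" by (simp add: power_mult_distrib field_simps)
  finally show ?thesis .
qed

lemma g_bound: "nY (g m x - g (m + d) x) \<le> \<phi> x x 0 / 2 * ((L ^ m - L ^ (m + d)) / (1 - L))"
proof (induction d)
  case 0 thus ?case by simp
next
  case (Suc d)
  have "nY (g m x - g (m + Suc d) x) \<le> nY (g m x - g (m + d) x) + nY (g (m + d) x - g (Suc (m + d)) x)"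
    using Y.hn_triangle_diff by simp
  also have "\<dots> \<le> \<phi> x x 0 / 2 * ((L ^ m - L ^ (m + d)) / (1 - L)) + L ^ (m + d) * \<phi> x x 0 / 2"
    using Suc step_bound by (intro add_mono) simp_all
  also have "\<dots> = \<phi> x x 0 / 2 * ((L ^ m - L ^ (m + Suc d)) / (1 - L))"
    using L1 by (simp add: field_simps)
  finally show ?case .
qed

lemma g_bound': "m \<le> n \<Longrightarrow> nY (g m x - g n x) \<le> \<phi> x x 0 / 2 * (L ^ m / (1 - L))"
proof -
  assume "m \<le> n"
  then obtain d where n: "n = m + d" using le_Suc_ex by blast
  have "nY (g m x - g n x) \<le> \<phi> x x 0 / 2 * ((L ^ m - L ^ (m + d)) / (1 - L))" using g_bound n by simp
  also have "\<dots> \<le> \<phi> x x 0 / 2 * (L ^ m / (1 - L))"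
    using L0 L1 phi_nonneg by (intro mult_left_mono divide_right_mono) simp_all
  finally show ?thesis .
qed

lemma g_cauchy: "\<forall>e>0. \<exists>N. \<forall>m\<ge>N. \<forall>n\<ge>N. nY (g m x - g n x) < e"
proof (intro allI impI)
  fix e :: real assume e: "e > 0"
  have "(\<lambda>m. \<phi> x x 0 / 2 * (L ^ m / (1 - L))) \<longlonglongrightarrow> \<phi> x x 0 / 2 * (0 / (1 - L))"
    using L0 L1 by (intro tendsto_intros LIMSEQ_power_zero) simp_all
  hence "eventually (\<lambda>m. \<phi> x x 0 / 2 * (L ^ m / (1 - L)) < e) sequentially"
    using e by (intro order_tendstoD) simp_all
  then obtain N where N: "\<And>m. m \<ge> N \<Longrightarrow> \<phi> x x 0 / 2 * (L ^ m / (1 - L)) < e"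
    by (auto simp: eventually_sequentially)
  have "nY (g m x - g n x) < e" if "m \<ge> N" "n \<ge> N" for m n
  proof (cases "m \<le> n")
    case True thus ?thesis using g_bound'[OF True, of x] N[OF that(1)] by linarith
  next
    case False
    hence "n \<le> m" by simp
    thus ?thesis using g_bound'[OF \<open>n \<le> m\<close>, of x] N[OF that(2)] Y.hn_diff_comm[of "g m x" "g n x"] by linarith
  qed
  thus "\<exists>N. \<forall>m\<ge>N. \<forall>n\<ge>N. nY (g m x - g n x) < e" by blast
qed

definition H :: "'x \<Rightarrow> 'y" where
  "H x = (SOME l. \<forall>e>0. \<exists>N. \<forall>n\<ge>N. nY (g n x - l) < e)"

lemma H_lim: "(\<lambda>n. nY (g n x - H x)) \<longlonglongrightarrow> 0"
proof -
  have "\<exists>l. \<forall>e>0. \<exists>N. \<forall>n\<ge>N. nY (g n x - l) < e" by (rule Y.complete[OF g_cauchy])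
  hence "\<forall>e>0. \<exists>N. \<forall>n\<ge>N. nY (g n x - H x) < e" unfolding H_def by (rule someI_ex)
  thus ?thesis by (simp add: LIMSEQ_iff Y.hn_nonneg)
qed

lemma H_bound: "nY (f x - H x) \<le> 1 / (2 - 2 * L) * \<phi> x x 0"
proof -
  have "nY (f x - H x) \<le> 1 / (2 - 2 * L) * \<phi> x x 0 + nY (g n x - H x)" for n
  proof -
    have "nY (f x - H x) \<le> nY (g 0 x - g n x) + nY (g n x - H x)"
      using Y.hn_triangle_diff g0 by metis
    moreover have "nY (g 0 x - g n x) \<le> 1 / (2 - 2 * L) * \<phi> x x 0"
      using g_bound'[of 0 n x] L1 by (simp add: field_simps)
    ultimately show ?thesis by linarith
  qed
  moreover have "(\<lambda>n. 1 / (2 - 2 * L) * \<phi> x x 0 + nY (g n x - H x)) \<longlonglongrightarrow> 1 / (2 - 2 * L) * \<phi> x x 0 + 0"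
    by (intro tendsto_intros H_lim)
  ultimately show ?thesis
    using tendsto_le[OF trivial_limit_sequentially, of _ _ "\<lambda>n. nY (f x - H x)"] by fastforce
qed

end


context hmod begin
lemma act_ip_scale: "act (ip (k *\<^sub>C u) (k *\<^sub>C v)) (k *\<^sub>C w) = (k * cnj k * k) *\<^sub>C act (ip u v) w"
  by (simp add: ip_scaleC ip_scaleC_right scaleC_scaleC act_scaleC2 act_scaleC_right mult.commute
      mult.left_commute)

lemma hn_add4: "hn (a + b + c + d) \<le> hn a + hn b + hn c + hn d"
  by (meson add_mono hn_triangle order_trans order_refl)
end

lemma unit_decomp:
  assumes "cmod w \<le> 2"
  shows "\<exists>a b. cmod a = 1 \<and> cmod b = 1 \<and> w = a + b"
proof -
  define r where "r = cmod w"
  define u where "u = (if w = 0 then 1 else w / complex_of_real r)"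
  have u1: "cmod u = 1" by (simp add: u_def r_def norm_divide)
  have wu: "w = complex_of_real r * u" by (simp add: u_def r_def)
  define s where "s = sqrt (1 - r\<^sup>2 / 4)"
  have "r * r \<le> 2 * 2" using assms r_def norm_ge_zero[of w] by (intro mult_mono) simp_all
  hence r2: "r\<^sup>2 / 4 \<le> 1" by (simp add: power2_eq_square)
  have ss: "s\<^sup>2 = 1 - r\<^sup>2 / 4" using r2 by (simp add: s_def)
  have c1: "cmod (Complex (r/2) s) = 1" using ss by (simp add: cmod_def power_divide)
  have c2: "cmod (Complex (r/2) (- s)) = 1" using ss by (simp add: cmod_def power_divide)
  have "u * Complex (r/2) s + u * Complex (r/2) (- s) = complex_of_real r * u"
    by (simp add: distrib_left[symmetric] complex_eq_iff mult.commute)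
  hence "w = u * Complex (r/2) s + u * Complex (r/2) (- s)" using wu by simp
  moreover have "cmod (u * Complex (r/2) s) = 1" "cmod (u * Complex (r/2) (- s)) = 1"
    using u1 c1 c2 by (simp_all add: norm_mult)
  ultimately show ?thesis by blast
qed

context stab begin

lemma g_add_err: "nY (g n (x + y) - g n x - g n y) \<le> L ^ n * \<phi> x y 0"
proof -
  define x' where "x' = (2::complex) ^ n *\<^sub>C x"
  define y' where "y' = (2::complex) ^ n *\<^sub>C y"
  have a: "nY (f (x' + y') - f x' - f y') \<le> \<phi> x' y' 0"
    using approx_add[rule_format, of 1 x' y'] by (simp add: scaleC_one)
  have "\<phi> x' y' 0 \<le> (2 * L) ^ n * \<phi> x y 0" using phi_scale[of n x y 0] by (simp add: x'_def y'_def)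
  hence b: "nY (f (x' + y') - f x' - f y') \<le> (2 * L) ^ n * \<phi> x y 0" using a by linarith
  have "g n (x + y) - g n x - g n y = ((1/2::complex) ^ n) *\<^sub>C (f (x' + y') - f x' - f y')"
    by (simp add: g_def x'_def y'_def scaleC_add_right scaleC_diff_right)
  hence "nY (g n (x + y) - g n x - g n y) = (1/2) ^ n * nY (f (x' + y') - f x' - f y')"
    by (simp only: nY_scale_half)
  also have "\<dots> \<le> (1/2) ^ n * ((2 * L) ^ n * \<phi> x y 0)" by (rule mult_left_mono[OF b]) simp
  also have "\<dots> = L ^ n * \<phi> x y 0" by (simp add: power_mult_distrib field_simps)
  finally show ?thesis .
qed

lemma H_add0: "H (x + y) - H x - H y = 0"
proof (rule hn_zero_lim[OF _ _ Y.hmod_axioms])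
  fix n
  have "H (x + y) - H x - H y = (H (x + y) - g n (x + y)) + (g n (x + y) - g n x - g n y)
      + (g n x - H x) + (g n y - H y)" by (simp add: algebra_simps)
  hence "nY (H (x + y) - H x - H y) \<le> nY (H (x + y) - g n (x + y)) + nY (g n (x + y) - g n x - g n y)
      + nY (g n x - H x) + nY (g n y - H y)" by (simp only: Y.hn_add4)
  also have "\<dots> \<le> nY (g n (x + y) - H (x + y)) + L ^ n * \<phi> x y 0 + nY (g n x - H x) + nY (g n y - H y)"
    using g_add_err[of n x y] Y.hn_diff_comm[of "H (x + y)"] by simp
  finally show "nY (H (x + y) - H x - H y) \<le> nY (g n (x + y) - H (x + y)) + L ^ n * \<phi> x y 0
      + nY (g n x - H x) + nY (g n y - H y)" .
next
  show "(\<lambda>n. nY (g n (x + y) - H (x + y)) + L ^ n * \<phi> x y 0 + nY (g n x - H x) + nY (g n y - H y))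
      \<longlonglongrightarrow> 0"
    using L0 L1 by (intro tendsto_add_zero tendsto_mult_left_zero H_lim LIMSEQ_power_zero) simp
qed

lemma H_add: "H (x + y) = H x + H y"
  using H_add0[of x y] by (simp add: algebra_simps)

lemma g_T_err:
  assumes "cmod \<mu> = 1"
  shows "nY (g n (\<mu> *\<^sub>C x) - \<mu> *\<^sub>C g n x - ((1/2::complex) ^ n) *\<^sub>C f 0) \<le> L ^ n * \<phi> x 0 0"
proof -
  define x' where "x' = (2::complex) ^ n *\<^sub>C x"
  have a: "nY (f (\<mu> *\<^sub>C x') - \<mu> *\<^sub>C f x' - f 0) \<le> \<phi> x' 0 0"
    using approx_add[rule_format, of \<mu> x' 0] assms by simp
  have "\<phi> x' 0 0 \<le> (2 * L) ^ n * \<phi> x 0 0" using phi_scale[of n x 0 0] by (simp add: x'_def)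
  hence b: "nY (f (\<mu> *\<^sub>C x') - \<mu> *\<^sub>C f x' - f 0) \<le> (2 * L) ^ n * \<phi> x 0 0" using a by linarith
  have "g n (\<mu> *\<^sub>C x) - \<mu> *\<^sub>C g n x - ((1/2::complex) ^ n) *\<^sub>C f 0
      = ((1/2::complex) ^ n) *\<^sub>C (f (\<mu> *\<^sub>C x') - \<mu> *\<^sub>C f x' - f 0)"
    by (simp add: g_def x'_def scaleC_diff_right scaleC_scaleC mult.commute)
  hence "nY (g n (\<mu> *\<^sub>C x) - \<mu> *\<^sub>C g n x - ((1/2::complex) ^ n) *\<^sub>C f 0)
      = (1/2) ^ n * nY (f (\<mu> *\<^sub>C x') - \<mu> *\<^sub>C f x' - f 0)"
    by (simp only: nY_scale_half)
  also have "\<dots> \<le> (1/2) ^ n * ((2 * L) ^ n * \<phi> x 0 0)" by (rule mult_left_mono[OF b]) simp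
  also have "\<dots> = L ^ n * \<phi> x 0 0" by (simp add: power_mult_distrib field_simps)
  finally show ?thesis .
qed

lemma H_T0:
  assumes mu: "cmod \<mu> = 1"
  shows "H (\<mu> *\<^sub>C x) - \<mu> *\<^sub>C H x = 0"
proof (rule hn_zero_lim[OF _ _ Y.hmod_axioms])
  fix n
  have "H (\<mu> *\<^sub>C x) - \<mu> *\<^sub>C H x = (H (\<mu> *\<^sub>C x) - g n (\<mu> *\<^sub>C x))
     + (g n (\<mu> *\<^sub>C x) - \<mu> *\<^sub>C g n x - ((1/2::complex) ^ n) *\<^sub>C f 0)
     + ((1/2::complex) ^ n) *\<^sub>C f 0 + \<mu> *\<^sub>C (g n x - H x)"
    by (simp add: algebra_simps scaleC_diff_right)
  hence "nY (H (\<mu> *\<^sub>C x) - \<mu> *\<^sub>C H x) \<le> nY (H (\<mu> *\<^sub>C x) - g n (\<mu> *\<^sub>C x))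
     + nY (g n (\<mu> *\<^sub>C x) - \<mu> *\<^sub>C g n x - ((1/2::complex) ^ n) *\<^sub>C f 0)
     + nY (((1/2::complex) ^ n) *\<^sub>C f 0) + nY (\<mu> *\<^sub>C (g n x - H x))" by (simp only: Y.hn_add4)
  also have "\<dots> \<le> nY (g n (\<mu> *\<^sub>C x) - H (\<mu> *\<^sub>C x)) + L ^ n * \<phi> x 0 0 + (1/2) ^ n * nY (f 0)
     + nY (g n x - H x)"
    using g_T_err[OF mu, of n x] Y.hn_diff_comm[of "H (\<mu> *\<^sub>C x)"] mu
    by (simp add: Y.hn_scaleC cmod_half_pow)
  finally show "nY (H (\<mu> *\<^sub>C x) - \<mu> *\<^sub>C H x) \<le> nY (g n (\<mu> *\<^sub>C x) - H (\<mu> *\<^sub>C x)) + L ^ n * \<phi> x 0 0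
     + (1/2) ^ n * nY (f 0) + nY (g n x - H x)" .
next
  show "(\<lambda>n. nY (g n (\<mu> *\<^sub>C x) - H (\<mu> *\<^sub>C x)) + L ^ n * \<phi> x 0 0 + (1/2) ^ n * nY (f 0)
     + nY (g n x - H x)) \<longlonglongrightarrow> 0"
    using L0 L1 by (intro tendsto_add_zero tendsto_mult_left_zero tendsto_mult_right_zero H_lim
        LIMSEQ_power_zero) simp_all
qed

lemma H_T: "cmod \<mu> = 1 \<Longrightarrow> H (\<mu> *\<^sub>C x) = \<mu> *\<^sub>C H x"
  using H_T0[of \<mu> x] by simp

lemma H_zero: "H 0 = 0"
  using H_add[of 0 0] by simp

lemma H_nat: "H (of_nat k *\<^sub>C x) = of_nat k *\<^sub>C H x"
proof (induction k)
  case 0 thus ?case by (simp add: H_zero)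
next
  case (Suc k)
  have "(of_nat (Suc k) :: complex) *\<^sub>C x = of_nat k *\<^sub>C x + x"
    by (simp add: scaleC_add_left scaleC_one)
  moreover have "(of_nat (Suc k) :: complex) *\<^sub>C H x = of_nat k *\<^sub>C H x + H x"
    by (simp add: scaleC_add_left scaleC_one)
  ultimately show ?case using Suc by (simp add: H_add)
qed

lemma H_scaleC: "H (c *\<^sub>C x) = c *\<^sub>C H x"
proof -
  define M where "M = Suc (nat \<lceil>cmod c\<rceil>)"
  have "M > 0" by (simp add: M_def)
  hence Mp: "real M > 0" by (simp only: of_nat_0_less_iff)
  have "cmod c \<le> real M" unfolding M_def by linarith
  hence "cmod (c / of_nat M) \<le> 2" using Mp by (simp add: norm_divide divide_le_eq)
  then obtain a b where ab: "cmod a = 1" "cmod b = 1" "c / of_nat M = a + b" using unit_decomp by blast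
  have c: "c = of_nat M * (a + b)" using ab(3) Mp by (simp add: field_simps)
  have "H (c *\<^sub>C x) = H (of_nat M *\<^sub>C (a *\<^sub>C x + b *\<^sub>C x))"
    by (simp add: c scaleC_scaleC scaleC_add_right scaleC_add_left distrib_left)
  also have "\<dots> = of_nat M *\<^sub>C (a *\<^sub>C H x + b *\<^sub>C H x)"
    by (simp add: H_nat H_add H_T ab)
  also have "\<dots> = c *\<^sub>C H x" by (simp add: c scaleC_scaleC scaleC_add_right scaleC_add_left distrib_left)
  finally show ?thesis .
qed

end


context stab begin

lemma g_hom_err:
  "nY (g (3 * n) (actA (ipX x y) z) - actB (ipY (g n x) (g n y)) (g n z)) \<le> (L / 4) ^ n * \<phi> x y z"
proof -
  define c where "c = (2::complex) ^ n"
  define h where "h = (1/2::complex) ^ n"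
  define w where "w = actA (ipX x y) z"
  have cc: "cnj c = c" by (simp add: c_def)
  have ch: "cnj h = h" by (simp add: h_def)
  have c3: "(2::complex) ^ (3 * n) = c * c * c" by (simp add: c_def power_mult power3_eq_cube mult.commute)
  have h3: "(1/2::complex) ^ (3 * n) = h * h * h" by (simp add: h_def power_mult power3_eq_cube mult.commute)
  have a: "nY (f (actA (ipX (c *\<^sub>C x) (c *\<^sub>C y)) (c *\<^sub>C z)) - actB (ipY (f (c *\<^sub>C x)) (f (c *\<^sub>C y))) (f (c *\<^sub>C z)))
      \<le> (2 * L) ^ n * \<phi> x y z"
    using approx_hom[rule_format, of "c *\<^sub>C x" "c *\<^sub>C y" "c *\<^sub>C z"] phi_scale[of n x y z]
    by (simp add: c_def)
  have e1: "actA (ipX (c *\<^sub>C x) (c *\<^sub>C y)) (c *\<^sub>C z) = (2::complex) ^ (3 * n) *\<^sub>C w"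
    by (simp add: X.act_ip_scale cc c3 w_def)
  have e2: "actB (ipY (g n x) (g n y)) (g n z) = (h * h * h) *\<^sub>C actB (ipY (f (c *\<^sub>C x)) (f (c *\<^sub>C y))) (f (c *\<^sub>C z))"
  proof -
    have gv: "g n v = h *\<^sub>C f (c *\<^sub>C v)" for v by (simp add: g_def c_def h_def)
    show ?thesis unfolding gv Y.act_ip_scale ch ..
  qed
  have "g (3 * n) w - actB (ipY (g n x) (g n y)) (g n z)
     = ((1/2::complex) ^ (3 * n)) *\<^sub>C (f (actA (ipX (c *\<^sub>C x) (c *\<^sub>C y)) (c *\<^sub>C z))
         - actB (ipY (f (c *\<^sub>C x)) (f (c *\<^sub>C y))) (f (c *\<^sub>C z)))"
    unfolding e2 by (simp add: g_def e1 h3 scaleC_diff_right)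
  hence "nY (g (3 * n) w - actB (ipY (g n x) (g n y)) (g n z)) = (1/2) ^ (3 * n) *
      nY (f (actA (ipX (c *\<^sub>C x) (c *\<^sub>C y)) (c *\<^sub>C z)) - actB (ipY (f (c *\<^sub>C x)) (f (c *\<^sub>C y))) (f (c *\<^sub>C z)))"
    by (simp only: nY_scale_half)
  also have "\<dots> \<le> (1/2) ^ (3 * n) * ((2 * L) ^ n * \<phi> x y z)" by (rule mult_left_mono[OF a]) simp
  also have "\<dots> = (L / 4) ^ n * \<phi> x y z"
  proof -
    have a0: "(1/2::real) ^ 3 = 1/8" by (simp add: power3_eq_cube)
    have a1: "(1/2::real) ^ (3 * n) = (1/8) ^ n" by (simp only: power_mult a0)
    have a2: "(1/8::real) ^ n * (2 * L) ^ n = (1/8 * (2 * L)) ^ n" by (rule power_mult_distrib[symmetric])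
    have a3: "1/8 * (2 * L) = L / 4" by simp
    have "(1/2::real) ^ (3 * n) * ((2 * L) ^ n * \<phi> x y z) = ((1/8::real) ^ n * (2 * L) ^ n) * \<phi> x y z"
      by (simp only: a1 mult.assoc)
    also have "\<dots> = (L / 4) ^ n * \<phi> x y z" by (simp only: a2 a3)
    finally show ?thesis .
  qed
  finally show ?thesis by (simp add: w_def)
qed

lemma H_hom0: "H (actA (ipX x y) z) - actB (ipY (H x) (H y)) (H z) = 0"
proof (rule hn_zero_lim[OF _ _ Y.hmod_axioms])
  define w where "w = actA (ipX x y) z"
  define A where "A = actB (ipY (H x) (H y)) (H z)"
  define dx where "dx n = nY (g n x - H x)" for n
  define dy where "dy n = nY (g n y - H y)" for n
  define dz where "dz n = nY (g n z - H z)" for n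
  fix n
  define An where "An = actB (ipY (g n x) (g n y)) (g n z)"
  have T: "nY (H w - A) \<le> nY (H w - g (3 * n) w) + nY (g (3 * n) w - An) + nY (An - A)"
  proof -
    have "nY (H w - A) = nY ((H w - g (3 * n) w) + (g (3 * n) w - An) + (An - A))" by simp
    also have "\<dots> \<le> nY ((H w - g (3 * n) w) + (g (3 * n) w - An)) + nY (An - A)" by (rule Y.hn_triangle)
    finally show ?thesis using Y.hn_triangle[of "H w - g (3 * n) w" "g (3 * n) w - An"] by linarith
  qed
  have C: "nY (H w - g (3 * n) w) = nY (g (3 * n) w - H w)" by (rule Y.hn_diff_comm)
  have E: "nY (g (3 * n) w - An) \<le> (L / 4) ^ n * \<phi> x y z" unfolding An_def w_def by (rule g_hom_err)
  have F: "nY (An - A) \<le> (dx n * (dy n + nY (H y)) + nY (H x) * dy n) * (dz n + nY (H z))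
       + norm (ipY (H x) (H y)) * dz n"
  proof -
    have gy: "nY (g n y) \<le> dy n + nY (H y)"
      using Y.hn_triangle[of "g n y - H y" "H y"] by (simp add: dy_def)
    have gz: "nY (g n z) \<le> dz n + nY (H z)"
      using Y.hn_triangle[of "g n z - H z" "H z"] by (simp add: dz_def)
    have ipb: "norm (ipY (g n x) (g n y) - ipY (H x) (H y)) \<le> dx n * (dy n + nY (H y)) + nY (H x) * dy n"
      using Y.ip_bound[of "g n x" "g n y" "H x" "H y"] gy Y.hn_nonneg[of "g n x - H x"]
      unfolding dx_def dy_def by (meson add_mono mult_left_mono order_refl order_trans)
    have "nY (An - A) \<le> norm (ipY (g n x) (g n y) - ipY (H x) (H y)) * nY (g n z) + norm (ipY (H x) (H y)) * dz n"
      unfolding An_def A_def dz_def by (rule Y.act_bound)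
    also have "\<dots> \<le> (dx n * (dy n + nY (H y)) + nY (H x) * dy n) * (dz n + nY (H z)) + norm (ipY (H x) (H y)) * dz n"
      using ipb gz by (intro add_mono mult_mono) (simp_all add: Y.hn_nonneg dx_def dy_def dz_def)
    finally show ?thesis .
  qed
  show "nY (H w - A) \<le> nY (g (3 * n) w - H w) + (L / 4) ^ n * \<phi> x y z
      + ((dx n * (dy n + nY (H y)) + nY (H x) * dy n) * (dz n + nY (H z)) + norm (ipY (H x) (H y)) * dz n)"
    using T C E F by linarith
next
  define w where "w = actA (ipX x y) z"
  define dx where "dx n = nY (g n x - H x)" for n
  define dy where "dy n = nY (g n y - H y)" for n
  define dz where "dz n = nY (g n z - H z)" for n
  have lx: "dx \<longlonglongrightarrow> 0" unfolding dx_def by (rule H_lim)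
  have ly: "dy \<longlonglongrightarrow> 0" unfolding dy_def by (rule H_lim)
  have lz: "dz \<longlonglongrightarrow> 0" unfolding dz_def by (rule H_lim)
  have l3: "(\<lambda>n. nY (g (3 * n) w - H w)) \<longlonglongrightarrow> 0"
  proof -
    have "strict_mono (\<lambda>n::nat. 3 * n)" by (rule strict_monoI) simp
    from LIMSEQ_subseq_LIMSEQ[OF H_lim this] show ?thesis by (simp add: o_def)
  qed
  have "(\<lambda>n. nY (g (3 * n) w - H w) + (L / 4) ^ n * \<phi> x y z
      + ((dx n * (dy n + nY (H y)) + nY (H x) * dy n) * (dz n + nY (H z)) + norm (ipY (H x) (H y)) * dz n))
      \<longlonglongrightarrow> 0 + 0 * \<phi> x y z + ((0 * (0 + nY (H y)) + nY (H x) * 0) * (0 + nY (H z)) + norm (ipY (H x) (H y)) * 0)"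
    using L0 L1 by (intro tendsto_intros l3 lx ly lz LIMSEQ_power_zero) simp
  thus "(\<lambda>n. nY (g (3 * n) (actA (ipX x y) z) - H (actA (ipX x y) z)) + (L / 4) ^ n * \<phi> x y z
      + ((nY (g n x - H x) * (nY (g n y - H y) + nY (H y)) + nY (H x) * nY (g n y - H y)) * (nY (g n z - H z) + nY (H z))
         + norm (ipY (H x) (H y)) * nY (g n z - H z))) \<longlonglongrightarrow> 0"
    by (simp add: w_def dx_def dy_def dz_def)
qed

lemma H_hom: "hilbert_module_hom actA ipX actB ipY H"
proof -
  have "H (actA (ipX x y) z) = actB (ipY (H x) (H y)) (H z)" for x y z
    using H_hom0[of x y z] by (simp only: right_minus_eq)
  thus ?thesis unfolding hilbert_module_hom_def using H_add H_scaleC by blast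
qed

lemma H_unique:
  assumes hom: "hilbert_module_hom actA ipX actB ipY H'"
    and bd: "\<forall>x. hnorm ipY (f x - H' x) \<le> 1 / (2 - 2 * L) * \<phi> x x 0"
  shows "H' = H"
proof
  fix x
  define K where "K = 1 / (2 - 2 * L)"
  have Kp: "K > 0" using L1 by (simp add: K_def)
  have H'c: "H' (c *\<^sub>C v) = c *\<^sub>C H' v" for c v using hom by (simp add: hilbert_module_hom_def)
  have "H x - H' x = 0"
  proof (rule hn_zero_lim[OF _ _ Y.hmod_axioms])
    fix n
    define c where "c = (2::complex) ^ n"
    have "H x - H' x = ((1/2::complex) ^ n) *\<^sub>C (H (c *\<^sub>C x) - H' (c *\<^sub>C x))"
      by (simp add: c_def H_scaleC H'c scaleC_diff_right scaleC_scaleC half_pow scaleC_one)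
    hence "nY (H x - H' x) = (1/2) ^ n * nY (H (c *\<^sub>C x) - H' (c *\<^sub>C x))" by (simp only: nY_scale_half)
    also have "nY (H (c *\<^sub>C x) - H' (c *\<^sub>C x)) \<le> nY (f (c *\<^sub>C x) - H (c *\<^sub>C x)) + nY (f (c *\<^sub>C x) - H' (c *\<^sub>C x))"
      using Y.hn_triangle_diff[of "H (c *\<^sub>C x)" "H' (c *\<^sub>C x)" "f (c *\<^sub>C x)"]
        Y.hn_diff_comm[of "H (c *\<^sub>C x)" "f (c *\<^sub>C x)"]
      by linarith
    also have "\<dots> \<le> K * \<phi> (c *\<^sub>C x) (c *\<^sub>C x) 0 + K * \<phi> (c *\<^sub>C x) (c *\<^sub>C x) 0"
      using H_bound bd by (intro add_mono) (simp_all add: K_def)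
    also have "\<dots> \<le> 2 * K * ((2 * L) ^ n * \<phi> x x 0)"
      using phi_scale[of n x x 0] Kp by (simp add: c_def)
    finally have "nY (H x - H' x) \<le> (1/2) ^ n * (2 * K * ((2 * L) ^ n * \<phi> x x 0))"
      by (simp add: mult_left_mono)
    also have "\<dots> = 2 * K * \<phi> x x 0 * L ^ n" by (simp add: power_mult_distrib field_simps)
    finally show "nY (H x - H' x) \<le> 2 * K * \<phi> x x 0 * L ^ n" .
  next
    show "(\<lambda>n. 2 * K * \<phi> x x 0 * L ^ n) \<longlonglongrightarrow> 0"
      using L0 L1 by (intro tendsto_mult_right_zero LIMSEQ_power_zero) simp
  qed
  thus "H' x = H x" by simp
qed

end

theorem theorem2p2:
  fixes actA :: "'a::cstar_algebra \<Rightarrow> 'x::complex_vec \<Rightarrow> 'x"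
    and ipX :: "'x \<Rightarrow> 'x \<Rightarrow> 'a"
    and actB :: "'b::cstar_algebra \<Rightarrow> 'y::complex_vec \<Rightarrow> 'y"
    and ipY :: "'y \<Rightarrow> 'y \<Rightarrow> 'b"
    and f :: "'x \<Rightarrow> 'y"
    and \<phi> :: "'x \<Rightarrow> 'x \<Rightarrow> 'x \<Rightarrow> real"
    and L :: real
  assumes "hilbert_module actA ipX"
    and "hilbert_module actB ipY"
    and "\<forall>x y z. \<phi> x y z \<ge> 0"
    and "\<forall>\<mu> x y. cmod \<mu> = 1 \<longrightarrow>
           hnorm ipY (f (\<mu> *\<^sub>C x + y) - \<mu> *\<^sub>C f x - f y) \<le> \<phi> x y 0"
    and "\<forall>x y z. hnorm ipY (f (actA (ipX x y) z) - actB (ipY (f x) (f y)) (f z)) \<le> \<phi> x y z"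
    and "0 \<le> L" and "L < 1"
    and "\<forall>x y z. \<phi> x y z \<le> 2 * L * \<phi> ((1/2) *\<^sub>C x) ((1/2) *\<^sub>C y) ((1/2) *\<^sub>C z)"
  shows "\<exists>!H. hilbert_module_hom actA ipX actB ipY H \<and>
           (\<forall>x. hnorm ipY (f x - H x) \<le> 1 / (2 - 2 * L) * \<phi> x x 0)"
proof -
  interpret stab actA ipX actB ipY f \<phi> L
    by (unfold_locales; (rule assms)?)
  show ?thesis
  proof (rule ex1I[of _ H])
    show "hilbert_module_hom actA ipX actB ipY H \<and> (\<forall>x. nY (f x - H x) \<le> 1 / (2 - 2 * L) * \<phi> x x 0)"
      using H_hom H_bound by blast
  next
    fix H' assume "hilbert_module_hom actA ipX actB ipY H' \<and>
        (\<forall>x. nY (f x - H' x) \<le> 1 / (2 - 2 * L) * \<phi> x x 0)"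
    thus "H' = H" using H_unique by blast
  qed
qed

end
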